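(* There exist a $\mathcal{C}^\infty$-smooth closed curve $\Gamma$ and two angles $\theta_1\neq\theta_2$ such that the map $\Phi=\Phi_{\theta_2}\circ\Phi_{\theta_1}$ is a well-defined orientation-preserving circle homeomorphism whose rotation number $\rho(\Gamma;\theta_1,\theta_2)$ is rational, and $(\Gamma,\ell_{\theta_1}\cup\ell_{\theta_2})$ is a Heisenberg Uniqueness Pair.
   Context: Let $\Gamma$ be parametrized by a one-to-one $1$-periodic map $\gamma:\mathbb{R}/\mathbb{Z}\to\mathbb{R}^2$. For an angle $\theta$ (identified with $(\cos\theta,\sin\theta)$), $\Phi_\theta(s)$ is defined by $\{t:\langle\gamma(t),\theta\rangle=\langle\gamma(s),\theta\rangle\}=\{s,\Phi_\theta(s)\}$, i.e. $\gamma(\Phi_\theta(s))$ is the other intersection point of $\Gamma$ with the line through $\gamma(s)$ orthogonal to $\theta$. For an orientation-preserving circle homeomorphism $\Phi$ with lift $\tilde\Phi:\mathbb{R}\to\mathbb{R}$, the rotation number is $\rho(\Phi)=\lim_{n\to\infty}\frac{\tilde\Phi^n(x)-x}{n}\bmod 1$, and $\rho(\Gamma;\theta_1,\theta_2)=\rho(\Phi_{\theta_2}\circ\Phi_{\theta_1})$. $\widehat{\mu}(x,y)=\int e^{-i(xs+yt)}\,d\mu(s,t)$; $\ell_\theta=\{t(\cos\theta,\sin\theta):t\in\mathbb{R}\}$; $\mathcal{AC}(\Gamma)$ is the set of finite complex measures on $\Gamma$ absolutely continuous with respect to arc length; $(\Gamma,\Lambda)$ is a Heisenberg Uniqueness Pair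 if every $\mu\in\mathcal{AC}(\Gamma)$ with $\widehat{\mu}=0$ on $\Lambda$ satisfies $\mu=0$. *)

theory Defs
  imports "HOL-Analysis.Analysis"
begin

definition dir :: "real \<Rightarrow> real \<times> real" where
  "dir \<theta> = (cos \<theta>, sin \<theta>)"

definition smooth_curve :: "(real \<Rightarrow> real \<times> real) \<Rightarrow> bool" where
  "smooth_curve \<gamma> \<longleftrightarrow> (\<exists>D :: nat \<Rightarrow> real \<Rightarrow> real \<times> real.
      D 0 = \<gamma> \<and> (\<forall>n t. (D n has_vector_derivative D (Suc n) t) (at t)))"

definition smooth_closed_curve :: "(real \<Rightarrow> real \<times> real) \<Rightarrow> bool" where
  "smooth_closed_curve \<gamma> \<longleftrightarrow> smooth_curve \<gamma>
     \<and> (\<forall>t. \<gamma> (t + 1) = \<gamma> t)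
     \<and> (\<forall>s t. \<gamma> s = \<gamma> t \<longrightarrow> s - t \<in> \<int>)
     \<and> (\<forall>t. vector_derivative \<gamma> (at t) \<noteq> 0)"

text \<open>Points of the circle R/Z are represented by their representatives in [0,1).\<close>
definition level_set :: "(real \<Rightarrow> real \<times> real) \<Rightarrow> real \<Rightarrow> real \<Rightarrow> real set" where
  "level_set \<gamma> \<theta> s = {t \<in> {0..<1}. \<gamma> t \<bullet> dir \<theta> = \<gamma> s \<bullet> dir \<theta>}"

text \<open>Phi_theta is well defined: every line orthogonal to theta through a point of Gamma
  meets Gamma in the point itself and at most one other point.\<close>
definition Phi_well_defined :: "(real \<Rightarrow> real \<times> real) \<Rightarrow> real \<Rightarrow> bool" where
  "Phi_well_defined \<gamma> \<theta> \<longleftrightarrow> (\<forall>s. finite (level_set \<gamma> \<theta> s) \<and> card (level_set \<gamma> \<theta> s) \<le> 2)"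

definition Phi :: "(real \<Rightarrow> real \<times> real) \<Rightarrow> real \<Rightarrow> real \<Rightarrow> real" where
  "Phi \<gamma> \<theta> s = (if \<exists>t \<in> level_set \<gamma> \<theta> s. t \<noteq> frac s
                  then (THE t. t \<in> level_set \<gamma> \<theta> s \<and> t \<noteq> frac s) else frac s)"

definition is_lift :: "(real \<Rightarrow> real) \<Rightarrow> (real \<Rightarrow> real) \<Rightarrow> bool" where
  "is_lift F \<Psi> \<longleftrightarrow> continuous_on UNIV F \<and> strict_mono F \<and> (\<forall>x. F (x + 1) = F x + 1)
      \<and> (\<forall>x. frac (F x) = frac (\<Psi> x))"

definition orientation_preserving_circle_homeo :: "(real \<Rightarrow> real) \<Rightarrow> bool" where
  "orientation_preserving_circle_homeo \<Psi> \<longleftrightarrow> (\<exists>F. is_lift F \<Psi>)"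

definition rotation_number :: "(real \<Rightarrow> real) \<Rightarrow> real" where
  "rotation_number \<Psi> = frac (lim (\<lambda>n. (((SOME F. is_lift F \<Psi>) ^^ n) 0 - 0) / real n))"

definition rho :: "(real \<Rightarrow> real \<times> real) \<Rightarrow> real \<Rightarrow> real \<Rightarrow> real" where
  "rho \<gamma> \<theta>1 \<theta>2 = rotation_number (Phi \<gamma> \<theta>2 \<circ> Phi \<gamma> \<theta>1)"

definition line :: "real \<Rightarrow> (real \<times> real) set" where
  "line \<theta> = {t *\<^sub>R dir \<theta> | t. True}"

text \<open>A measure in AC(Gamma) is f ds with f integrable w.r.t. arc length on Gamma; via the
  parametrization, ds = |gamma'(t)| dt on one period [0,1].\<close>
definition AC_density :: "(real \<Rightarrow> real \<times> real) \<Rightarrow> (real \<times> real \<Rightarrow> complex) \<Rightarrow> bool" where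
  "AC_density \<gamma> f \<longleftrightarrow> set_integrable lborel {0..1}
      (\<lambda>t. f (\<gamma> t) * complex_of_real (norm (vector_derivative \<gamma> (at t))))"

definition fourier_AC :: "(real \<Rightarrow> real \<times> real) \<Rightarrow> (real \<times> real \<Rightarrow> complex) \<Rightarrow> real \<times> real \<Rightarrow> complex" where
  "fourier_AC \<gamma> f p = (LINT t:{0..1}|lborel.
      exp (- \<i> * complex_of_real (fst p * fst (\<gamma> t) + snd p * snd (\<gamma> t)))
      * f (\<gamma> t) * complex_of_real (norm (vector_derivative \<gamma> (at t))))"

definition AC_zero :: "(real \<Rightarrow> real \<times> real) \<Rightarrow> (real \<times> real \<Rightarrow> complex) \<Rightarrow> bool" where
  "AC_zero \<gamma> f \<longleftrightarrow> (AE t in lborel. t \<in> {0..1} \<longrightarrow>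
      f (\<gamma> t) * complex_of_real (norm (vector_derivative \<gamma> (at t))) = 0)"

definition HUP :: "(real \<Rightarrow> real \<times> real) \<Rightarrow> (real \<times> real) set \<Rightarrow> bool" where
  "HUP \<gamma> \<Lambda> \<longleftrightarrow> (\<forall>f. AC_density \<gamma> f \<and> (\<forall>p \<in> \<Lambda>. fourier_AC \<gamma> f p = 0) \<longrightarrow> AC_zero \<gamma> f)"

end

theory Submission
  imports Defs "HOL-Probability.Probability"
begin


definition Ak :: "real \<Rightarrow> real \<Rightarrow> real" where
  "Ak k a = a + arctan ((k - 1) * sin a * cos a / ((cos a)\<^sup>2 + k * (sin a)\<^sup>2))"

lemma Ak_den_pos: "(k::real) > 0 \<Longrightarrow> (cos (a::real))\<^sup>2 + k * (sin a)\<^sup>2 > 0"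
proof -
  assume k: "k > 0"
  have "cos a \<noteq> 0 \<or> sin a \<noteq> 0" using sin_cos_squared_add2[of a] by (cases "cos a = 0") auto
  then show ?thesis using k
    by (metis add_nonneg_pos add_pos_nonneg mult_pos_pos zero_less_power2 zero_le_power2 mult_nonneg_nonneg less_eq_real_def)
qed

lemma Ak_den2_pos: "(k::real) > 0 \<Longrightarrow> (cos (a::real))\<^sup>2 + k\<^sup>2 * (sin a)\<^sup>2 > 0"
proof -
  assume "k > 0" then have "k\<^sup>2 > 0" by simp
  then show ?thesis using Ak_den_pos[of "k\<^sup>2" a] by simp
qed

lemma Ak_cos_sin:
  assumes k: "k > 0"
  shows "cos (Ak k a) = cos a / sqrt ((cos a)\<^sup>2 + k\<^sup>2 * (sin a)\<^sup>2)"
    and "sin (Ak k a) = k * sin a / sqrt ((cos a)\<^sup>2 + k\<^sup>2 * (sin a)\<^sup>2)"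
proof -
  define c where "c = cos a"
  define s where "s = sin a"
  define D where "D = c\<^sup>2 + k * s\<^sup>2"
  define r where "r = (k - 1) * s * c / D"
  have cs: "c\<^sup>2 + s\<^sup>2 = 1" unfolding c_def s_def by simp
  have D: "D > 0" unfolding D_def c_def s_def using Ak_den_pos[OF k] .
  have E: "c\<^sup>2 + k\<^sup>2 * s\<^sup>2 > 0" unfolding c_def s_def using Ak_den2_pos[OF k] .
  have A: "Ak k a = a + arctan r" unfolding Ak_def r_def D_def c_def s_def by simp
  have "1 + r\<^sup>2 = (D\<^sup>2 + ((k - 1) * s * c)\<^sup>2) / D\<^sup>2" unfolding r_def using D
    by (simp add: field_simps power2_eq_square)
  also have "D\<^sup>2 + ((k - 1) * s * c)\<^sup>2 = (c\<^sup>2 + k\<^sup>2 * s\<^sup>2) * (c\<^sup>2 + s\<^sup>2)"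
    unfolding D_def by (simp add: power2_eq_square algebra_simps)
  finally have r2: "1 + r\<^sup>2 = (c\<^sup>2 + k\<^sup>2 * s\<^sup>2) / D\<^sup>2" using cs by simp
  have sq: "sqrt (1 + r\<^sup>2) = sqrt (c\<^sup>2 + k\<^sup>2 * s\<^sup>2) / D"
    using D by (simp add: r2 real_sqrt_divide)
  have sp: "sqrt (c\<^sup>2 + k\<^sup>2 * s\<^sup>2) > 0" using E by simp
  have "cos (Ak k a) = (c - s * r) / sqrt (1 + r\<^sup>2)"
    unfolding A cos_add cos_arctan sin_arctan c_def s_def by (simp add: diff_divide_distrib)
  also have "c - s * r = c / D * (c\<^sup>2 + s\<^sup>2)" unfolding r_def D_def using D[unfolded D_def]
    by (simp add: field_simps power2_eq_square)
  finally show "cos (Ak k a) = cos a / sqrt ((cos a)\<^sup>2 + k\<^sup>2 * (sin a)\<^sup>2)"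
    using D sp cs by (simp add: sq c_def[symmetric] s_def[symmetric] field_simps)
  have "sin (Ak k a) = (s + c * r) / sqrt (1 + r\<^sup>2)"
    unfolding A sin_add cos_arctan sin_arctan c_def s_def by (simp add: add_divide_distrib)
  also have "s + c * r = k * s / D * (c\<^sup>2 + s\<^sup>2)" unfolding r_def D_def using D[unfolded D_def]
    by (simp add: field_simps power2_eq_square)
  finally show "sin (Ak k a) = k * sin a / sqrt ((cos a)\<^sup>2 + k\<^sup>2 * (sin a)\<^sup>2)"
    using D sp cs by (simp add: sq c_def[symmetric] s_def[symmetric] field_simps)
qed

lemma Ak_close: "\<bar>Ak k a - a\<bar> < pi/2"
  unfolding Ak_def using arctan_bounded[of "(k - 1) * sin a * cos a / ((cos a)\<^sup>2 + k * (sin a)\<^sup>2)"]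
  by auto

lemma Ak_pi: "Ak k (a + pi) = Ak k a + pi"
  unfolding Ak_def by (simp add: sin_add cos_add)

lemma Ak_mpi: "Ak k (a - pi) = Ak k a - pi"
  using Ak_pi[of k "a - pi"] by simp

lemma Ak_int: "Ak k (a + of_int n * pi) = Ak k a + of_int n * pi"
proof (induction n arbitrary: a rule: int_induct[where k = 0])
  case base then show ?case by simp
next
  case (step1 i) then show ?case using Ak_pi[of k "a + of_int i * pi"] by (simp add: algebra_simps)
next
  case (step2 i) then show ?case using Ak_mpi[of k "a + of_int i * pi"] by (simp add: algebra_simps)
qed

lemma Ak_cont: "k > 0 \<Longrightarrow> continuous_on UNIV (Ak k)"
  unfolding Ak_def using Ak_den_pos
  by (intro continuous_intros) (auto simp: less_imp_neq[symmetric])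

lemma Ak_multpi2: "Ak k (of_int n * (pi/2)) = of_int n * (pi/2)"
proof -
  have "sin (2 * (of_int n * (pi/2))) = 0"
    using sin_zero_iff_int2[of "of_int n * pi"] by auto
  then have "sin (of_int n * (pi/2)) * cos (of_int n * (pi/2)) = 0"
    by (simp only: sin_double)
  then show ?thesis unfolding Ak_def by simp
qed

lemma cos_sin_eq_close:
  fixes x y :: real
  assumes "cos x = cos y" "sin x = sin y" "\<bar>x - y\<bar> < 2 * pi"
  shows "x = y"
proof -
  obtain n :: int where n: "x = y + 2 * pi * n" using sin_cos_eq_iff[of x y] assms by auto
  have "\<bar>2 * pi * n\<bar> < 2 * pi" using assms(3) n by simp
  then have "\<bar>real_of_int n\<bar> < 1" by (simp add: abs_mult)
  then have "n = 0" by linarith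
  then show ?thesis using n by simp
qed

lemma Ak_inv:
  assumes k: "k > 0"
  shows "Ak k (Ak (1/k) a) = a"
proof -
  define b where "b = Ak (1/k) a"
  define \<rho> where "\<rho> = sqrt ((cos a)\<^sup>2 + (1/k)\<^sup>2 * (sin a)\<^sup>2)"
  have rp: "\<rho> > 0" unfolding \<rho>_def using Ak_den2_pos[of "1/k" a] k by simp
  have cb: "cos b = cos a / \<rho>" and sb: "sin b = (1/k) * sin a / \<rho>"
    unfolding b_def \<rho>_def using Ak_cos_sin[of "1/k" a] k by auto
  have "(cos b)\<^sup>2 + k\<^sup>2 * (sin b)\<^sup>2 = ((cos a)\<^sup>2 + (sin a)\<^sup>2) / \<rho>\<^sup>2"
    unfolding cb sb using k rp by (simp add: field_simps power2_eq_square)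
  also have "\<dots> = (1 / \<rho>)\<^sup>2" by (simp add: power_divide)
  finally have e: "sqrt ((cos b)\<^sup>2 + k\<^sup>2 * (sin b)\<^sup>2) = 1 / \<rho>" using rp by simp
  have c: "cos (Ak k b) = cos a" using Ak_cos_sin(1)[OF k, of b] e cb rp by simp
  have s: "sin (Ak k b) = sin a" using Ak_cos_sin(2)[OF k, of b] e sb rp k by simp
  have "\<bar>Ak k b - a\<bar> < 2 * pi" using Ak_close[of k b] Ak_close[of "1/k" a] unfolding b_def by linarith
  then show ?thesis using cos_sin_eq_close[OF c s] unfolding b_def by simp
qed

lemma Ak_inv': "k > 0 \<Longrightarrow> Ak (1/k) (Ak k a) = a"
  using Ak_inv[of "1/k" a] by simp

lemma Ak_inj: "k > 0 \<Longrightarrow> inj (Ak k)"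
  by (metis Ak_inv' injI)

lemma Ak_strict_mono:
  assumes k: "k > 0"
  shows "strict_mono (Ak k)"
proof (rule strict_monoI)
  fix x y :: real assume xy: "x < y"
  have "(Ak k x < Ak k y \<and> Ak k y < Ak k (y + pi)) \<or> (Ak k (y + pi) < Ak k y \<and> Ak k y < Ak k x)"
    by (rule continuous_inj_imp_mono[OF xy])
       (use xy in \<open>auto intro: continuous_on_subset[OF Ak_cont[OF k]] inj_on_subset[OF Ak_inj[OF k]]\<close>)
  then show "Ak k x < Ak k y" using Ak_pi[of k y] by auto
qed

lemma Ak_mono_iff: "k > 0 \<Longrightarrow> Ak k x < Ak k y \<longleftrightarrow> x < y"
  using Ak_strict_mono by (simp add: strict_mono_less)

lemma Ak_mono_le_iff: "k > 0 \<Longrightarrow> Ak k x \<le> Ak k y \<longleftrightarrow> x \<le> y"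
  using Ak_strict_mono by (simp add: strict_mono_less_eq)

lemma Ak_2pi_int: "Ak k (a + 2 * pi * of_int n) = Ak k a + 2 * pi * of_int n"
  using Ak_int[of k a "2 * n"] by (simp add: algebra_simps)

lemma Ak_odd: "Ak k (- a) = - Ak k a"
  unfolding Ak_def by (simp add: arctan_minus)


lemma char_density_distr:
  fixes P u :: "real \<Rightarrow> real"
  assumes [measurable]: "P \<in> borel_measurable borel" "u \<in> borel_measurable borel"
    and nn: "\<And>t. 0 \<le> P t"
  shows "char (distr (density lborel (\<lambda>t. ennreal (P t))) borel u) \<tau> =
      (\<integral>t. P t *\<^sub>R iexp (\<tau> * u t) \<partial>lborel)"
proof -
  have "char (distr (density lborel (\<lambda>t. ennreal (P t))) borel u) \<tau> =
      (\<integral>t. iexp (\<tau> * u t) \<partial>(density lborel (\<lambda>t. ennreal (P t))))"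
    unfolding char_def by (subst integral_distr) auto
  also have "\<dots> = (\<integral>t. P t *\<^sub>R iexp (\<tau> * u t) \<partial>lborel)"
    by (subst integral_density) (auto simp: nn)
  finally show ?thesis .
qed

lemma prob_density_distr:
  fixes P u :: "real \<Rightarrow> real"
  assumes [measurable]: "P \<in> borel_measurable borel" "u \<in> borel_measurable borel"
    and nn: "\<And>t. 0 \<le> P t" and int: "integrable lborel P" and one: "(\<integral>t. P t \<partial>lborel) = 1"
  shows "real_distribution (distr (density lborel (\<lambda>t. ennreal (P t))) borel u)"
proof -
  have "emeasure (density lborel (\<lambda>t. ennreal (P t))) UNIV = 1"
    using int one nn by (subst emeasure_density) (auto simp: nn_integral_eq_integral)
  then have "prob_space (density lborel (\<lambda>t. ennreal (P t)))"
    by (intro prob_spaceI) auto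
  then have "prob_space (distr (density lborel (\<lambda>t. ennreal (P t))) borel u)"
    by (intro prob_space.prob_space_distr) auto
  then show ?thesis unfolding real_distribution_def real_distribution_axioms_def by auto
qed

lemma integrable_ind_mult:
  fixes f :: "real \<Rightarrow> real"
  shows "integrable lborel f \<Longrightarrow> S \<in> sets borel \<Longrightarrow> integrable lborel (\<lambda>t. indicator S t * f t)"
  by (subst mult.commute) (rule integrable_real_mult_indicator, auto)

lemma fourier_unique_real:
  fixes u H :: "real \<Rightarrow> real"
  assumes [measurable]: "u \<in> borel_measurable borel"
    and Hi: "integrable lborel H"
    and z: "\<And>\<tau>. (\<integral>t. H t *\<^sub>R iexp (\<tau> * u t) \<partial>lborel) = 0"
    and B: "B \<in> sets borel"
  shows "(\<integral>t. indicator (u -` B) t * H t \<partial>lborel) = 0"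
proof -
  have Hm[measurable]: "H \<in> borel_measurable borel" using Hi by (simp add: measurable_completion)
  have uB[measurable]: "u -` B \<in> sets borel" using measurable_sets_borel[of u borel B] B by simp
  define P where "P t = max (H t) 0" for t
  define N where "N t = max (- H t) 0" for t
  have [measurable]: "P \<in> borel_measurable borel" "N \<in> borel_measurable borel"
    unfolding P_def N_def by measurable
  have Pi: "integrable lborel P" unfolding P_def using Hi by (intro integrable_max) auto
  have Ni: "integrable lborel N" unfolding N_def using Hi by (intro integrable_max) auto
  have HPN: "H t = P t - N t" for t unfolding P_def N_def by auto
  have Pn: "0 \<le> P t" "0 \<le> N t" for t unfolding P_def N_def by auto
  have eqc: "(\<integral>t. P t *\<^sub>R iexp (\<tau> * u t) \<partial>lborel) = (\<integral>t. N t *\<^sub>R iexp (\<tau> * u t) \<partial>lborel)" for \<tau>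
  proof -
    have ip: "integrable lborel (\<lambda>t. P t *\<^sub>R iexp (\<tau> * u t))"
      by (rule Bochner_Integration.integrable_bound[OF Pi]) (auto simp: norm_exp_i_times abs_of_nonneg Pn)
    have iN: "integrable lborel (\<lambda>t. N t *\<^sub>R iexp (\<tau> * u t))"
      by (rule Bochner_Integration.integrable_bound[OF Ni]) (auto simp: norm_exp_i_times abs_of_nonneg Pn)
    have "(\<integral>t. P t *\<^sub>R iexp (\<tau> * u t) \<partial>lborel) - (\<integral>t. N t *\<^sub>R iexp (\<tau> * u t) \<partial>lborel)
       = (\<integral>t. H t *\<^sub>R iexp (\<tau> * u t) \<partial>lborel)"
      by (subst Bochner_Integration.integral_diff[symmetric, OF ip iN]) (simp add: HPN scaleR_diff_left)
    then show ?thesis using z by simp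
  qed
  have cPN: "(\<integral>t. P t \<partial>lborel) = (\<integral>t. N t \<partial>lborel)"
    using eqc[of 0] by (simp add: scaleR_conv_of_real integral_complex_of_real)
  define c where "c = (\<integral>t. P t \<partial>lborel)"
  have c0: "0 \<le> c" unfolding c_def by (auto intro: integral_nonneg_AE simp: Pn)
  have ub: "(\<integral>t. indicator (u -` B) t * P t \<partial>lborel) = (\<integral>t. indicator (u -` B) t * N t \<partial>lborel)"
  proof (cases "c = 0")
    case True
    have "AE t in lborel. P t = 0"
      using True Pi unfolding c_def by (subst integral_nonneg_eq_0_iff_AE[symmetric]) (auto simp: Pn)
    moreover have "AE t in lborel. N t = 0"
      using True Ni cPN unfolding c_def by (subst integral_nonneg_eq_0_iff_AE[symmetric]) (auto simp: Pn)
    ultimately have "AE t in lborel. indicator (u -` B) t * P t = 0" "AE t in lborel. indicator (u -` B) t * N t = 0"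
      by (auto elim: AE_mp)
    then show ?thesis by (simp add: integral_eq_zero_AE)
  next
    case False
    then have cp: "c > 0" using c0 by auto
    define M1 where "M1 = distr (density lborel (\<lambda>t. ennreal (P t / c))) borel u"
    define M2 where "M2 = distr (density lborel (\<lambda>t. ennreal (N t / c))) borel u"
    have r1: "real_distribution M1" unfolding M1_def
      using Pi cp by (intro prob_density_distr) (auto simp: Pn c_def)
    have r2: "real_distribution M2" unfolding M2_def
      using Ni cp cPN by (intro prob_density_distr) (auto simp: Pn c_def)
    have "char M1 \<tau> = char M2 \<tau>" for \<tau>
    proof -
      have "char M1 \<tau> = (\<integral>t. (P t / c) *\<^sub>R iexp (\<tau> * u t) \<partial>lborel)"
        unfolding M1_def using cp by (intro char_density_distr) (auto simp: Pn)
      also have "\<dots> = (1/c) *\<^sub>R (\<integral>t. P t *\<^sub>R iexp (\<tau> * u t) \<partial>lborel)"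
        by (subst integral_scaleR_right[symmetric]) (simp add: scaleR_scaleR)
      also have "\<dots> = (1/c) *\<^sub>R (\<integral>t. N t *\<^sub>R iexp (\<tau> * u t) \<partial>lborel)" by (simp only: eqc)
      also have "\<dots> = (\<integral>t. (N t / c) *\<^sub>R iexp (\<tau> * u t) \<partial>lborel)"
        by (subst integral_scaleR_right[symmetric]) (simp add: scaleR_scaleR)
      also have "\<dots> = char M2 \<tau>"
        unfolding M2_def using cp by (intro char_density_distr[symmetric]) (auto simp: Pn)
      finally show ?thesis .
    qed
    then have "M1 = M2" using r1 r2 by (intro Levy_uniqueness) auto
    then have "emeasure M1 B = emeasure M2 B" by simp
    then have emeq: "(\<integral>\<^sup>+t. ennreal (P t / c) * indicator (u -` B) t \<partial>lborel)
        = (\<integral>\<^sup>+t. ennreal (N t / c) * indicator (u -` B) t \<partial>lborel)"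
      unfolding M1_def M2_def using B uB by (simp add: emeasure_distr, subst (asm) (1 2) emeasure_density) auto
    have "(\<integral>\<^sup>+t. ennreal (indicator (u -` B) t * P t / c) \<partial>lborel)
        = (\<integral>\<^sup>+t. ennreal (indicator (u -` B) t * N t / c) \<partial>lborel)"
    proof -
      have "\<And>X t. ennreal (X / c) * indicator (u -` B) t = ennreal (indicator (u -` B) t * X / c)"
        by (simp split: split_indicator)
      then show ?thesis using emeq by simp
    qed
    moreover have i1: "integrable lborel (\<lambda>t. indicator (u -` B) t * P t / c)"
      using Pi B by (intro integrable_divide integrable_ind_mult) auto
    moreover have i2: "integrable lborel (\<lambda>t. indicator (u -` B) t * N t / c)"
      using Ni B by (intro integrable_divide integrable_ind_mult) auto
    have nn1: "\<And>t. 0 \<le> indicator (u -` B) t * P t / c" "\<And>t. 0 \<le> indicator (u -` B) t * N t / c"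
      using cp Pn by auto
    have a1: "(\<integral>\<^sup>+t. ennreal (indicator (u -` B) t * P t / c) \<partial>lborel) = ennreal (\<integral>t. indicator (u -` B) t * P t / c \<partial>lborel)"
      by (rule nn_integral_eq_integral[OF i1]) (auto intro!: AE_I2 simp: nn1)
    have a2: "(\<integral>\<^sup>+t. ennreal (indicator (u -` B) t * N t / c) \<partial>lborel) = ennreal (\<integral>t. indicator (u -` B) t * N t / c \<partial>lborel)"
      by (rule nn_integral_eq_integral[OF i2]) (auto intro!: AE_I2 simp: nn1)
    have z1: "0 \<le> (\<integral>t. indicator (u -` B) t * P t / c \<partial>lborel)" "0 \<le> (\<integral>t. indicator (u -` B) t * N t / c \<partial>lborel)"
      by (intro integral_nonneg_AE AE_I2 nn1)+
    ultimately have "(\<integral>t. indicator (u -` B) t * P t / c \<partial>lborel)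
        = (\<integral>t. indicator (u -` B) t * N t / c \<partial>lborel)"
      using a1 a2 z1 by (metis ennreal_inj)
    then show ?thesis using cp by simp
  qed
  have "(\<integral>t. indicator (u -` B) t * H t \<partial>lborel) =
     (\<integral>t. indicator (u -` B) t * P t \<partial>lborel) - (\<integral>t. indicator (u -` B) t * N t \<partial>lborel)"
    using Pi Ni B
    by (subst Bochner_Integration.integral_diff[symmetric])
       (auto intro!: integrable_ind_mult simp: HPN right_diff_distrib)
  then show ?thesis using ub by simp
qed

lemma integrable_iexp_mult:
  fixes u :: "real \<Rightarrow> real" and G :: "real \<Rightarrow> complex"
  assumes [measurable]: "u \<in> borel_measurable borel" and Gi: "integrable lborel G"
  shows "integrable lborel (\<lambda>t. iexp (\<sigma> * u t) * G t)"
proof -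
  have [measurable]: "G \<in> borel_measurable borel" using Gi by (simp add: measurable_completion)
  show ?thesis
    by (rule Bochner_Integration.integrable_bound[OF Gi]) (auto simp: norm_mult norm_exp_i_times)
qed

lemma re_mul_cnj: fixes z e :: complex shows "Re z *\<^sub>R e = (e * z + e * cnj z) / 2"
  by (simp add: complex_eq_iff field_simps scaleR_conv_of_real)
lemma im_mul_cnj: fixes z e :: complex shows "Im z *\<^sub>R e = (e * z - e * cnj z) / (2 * \<i>)"
  by (simp only: right_diff_distrib[symmetric] complex_diff_cnj scaleR_conv_of_real) (simp add: field_simps)

lemma fourier_unique_complex:
  fixes u :: "real \<Rightarrow> real" and G :: "real \<Rightarrow> complex"
  assumes um[measurable]: "u \<in> borel_measurable borel"
    and Gi: "integrable lborel G"
    and z: "\<And>\<tau>. (\<integral>t. iexp (\<tau> * u t) * G t \<partial>lborel) = 0"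
    and B: "B \<in> sets borel"
  shows "(\<integral>t. indicator (u -` B) t *\<^sub>R G t \<partial>lborel) = 0"
proof -
  have Gm[measurable]: "G \<in> borel_measurable borel" using Gi by (simp add: measurable_completion)
  have V: "(\<integral>t. iexp (\<sigma> * u t) * cnj (G t) \<partial>lborel) = 0" for \<sigma>
  proof -
    have "(\<integral>t. iexp (\<sigma> * u t) * cnj (G t) \<partial>lborel) = (\<integral>t. cnj (iexp (-\<sigma> * u t) * G t) \<partial>lborel)"
      by (intro Bochner_Integration.integral_cong refl) (simp add: exp_cnj)
    also have "\<dots> = cnj (\<integral>t. iexp (-\<sigma> * u t) * G t \<partial>lborel)" by (rule Bochner_Integration.integral_cnj)
    finally show ?thesis using z[of "-\<sigma>"] by simp
  qed
  have iR: "(\<integral>t. Re (G t) *\<^sub>R iexp (\<sigma> * u t) \<partial>lborel) = 0" for \<sigma>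
  proof -
    have "(\<integral>t. Re (G t) *\<^sub>R iexp (\<sigma> * u t) \<partial>lborel)
        = (\<integral>t. (iexp (\<sigma> * u t) * G t + iexp (\<sigma> * u t) * cnj (G t)) / 2 \<partial>lborel)"
      by (intro Bochner_Integration.integral_cong refl)
         (rule re_mul_cnj)
    also have "\<dots> = ((\<integral>t. iexp (\<sigma> * u t) * G t \<partial>lborel) + (\<integral>t. iexp (\<sigma> * u t) * cnj (G t) \<partial>lborel)) / 2"
      using integrable_iexp_mult[OF um Gi, of \<sigma>] integrable_iexp_mult[OF um, of "\<lambda>t. cnj (G t)" \<sigma>] Gi
      by (simp add: Bochner_Integration.integral_add)
    finally show ?thesis using z V by simp
  qed
  have iI: "(\<integral>t. Im (G t) *\<^sub>R iexp (\<sigma> * u t) \<partial>lborel) = 0" for \<sigma>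
  proof -
    have "(\<integral>t. Im (G t) *\<^sub>R iexp (\<sigma> * u t) \<partial>lborel)
        = (\<integral>t. (iexp (\<sigma> * u t) * G t - iexp (\<sigma> * u t) * cnj (G t)) / (2 * \<i>) \<partial>lborel)"
      by (intro Bochner_Integration.integral_cong refl)
         (rule im_mul_cnj)
    also have "\<dots> = ((\<integral>t. iexp (\<sigma> * u t) * G t \<partial>lborel) - (\<integral>t. iexp (\<sigma> * u t) * cnj (G t) \<partial>lborel)) / (2 * \<i>)"
      using integrable_iexp_mult[OF um Gi, of \<sigma>] integrable_iexp_mult[OF um, of "\<lambda>t. cnj (G t)" \<sigma>] Gi
      by (simp add: Bochner_Integration.integral_diff)
    finally show ?thesis using z V by simp
  qed
  have r1: "(\<integral>t. indicator (u -` B) t * Re (G t) \<partial>lborel) = 0"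
    by (rule fourier_unique_real[OF um _ iR B]) (use Gi in auto)
  have r2: "(\<integral>t. indicator (u -` B) t * Im (G t) \<partial>lborel) = 0"
    by (rule fourier_unique_real[OF um _ iI B]) (use Gi in auto)
  show ?thesis
  proof (rule complex_eqI)
    have ig: "integrable lborel (\<lambda>t. indicator (u -` B) t *\<^sub>R G t)"
      using Gi measurable_sets_borel[of u borel B] B by (intro integrable_mult_indicator) auto
    show "Re (\<integral>t. indicator (u -` B) t *\<^sub>R G t \<partial>lborel) = Re 0"
      by (subst Bochner_Integration.integral_Re[OF ig, symmetric]) (use r1 in simp)
    show "Im (\<integral>t. indicator (u -` B) t *\<^sub>R G t \<partial>lborel) = Im 0"
      by (subst Bochner_Integration.integral_Im[OF ig, symmetric]) (use r2 in simp)
  qed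
qed


definition s1 :: "real \<Rightarrow> real" where "s1 t = - t - 1/4"
definition s2 :: "real \<Rightarrow> real" where "s2 t = Ak 2 (pi/2 - Ak (1/2) (2*pi*t)) / (2*pi)"
definition FF :: "real \<Rightarrow> real" where "FF t = s2 (s1 t)"
definition u1 :: "real \<Rightarrow> real" where "u1 t = cos (2*pi*t) - sin (2*pi*t)"
definition u2 :: "real \<Rightarrow> real" where
  "u2 t = (2 * cos (2*pi*t) + sin (2*pi*t)) / sqrt (1 + 3 * (cos (2*pi*t))\<^sup>2)"

lemma cos_minus_sin: "cos x - sin x = sqrt 2 * cos (x + pi/4)"
  by (simp add: cos_add cos_45 sin_45 algebra_simps)

lemma cos_plus_sin: "cos x + sin x = sqrt 2 * cos (x - pi/4)"
  by (simp add: cos_diff cos_45 sin_45 algebra_simps)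

lemma s2_inv: "s2 (s2 t) = t"
  unfolding s2_def using Ak_inv[of 2] Ak_inv'[of 2] by simp

lemma Ak_2pi_int': "Ak k (2 * pi * of_int n + a) = Ak k a + 2 * pi * of_int n"
  using Ak_2pi_int[of k a n] by (simp add: algebra_simps)

lemma cancel2pi: "2*pi*x = 2*pi*y + 2*pi*z \<longleftrightarrow> x = y + z"
proof -
  have "2*pi*y + 2*pi*z = 2*pi*(y+z)" by (simp add: algebra_simps)
  then show ?thesis by simp
qed

lemma s2_int: "s2 (t + of_int n) = s2 t - of_int n"
proof -
  have h1: "Ak (1/2) (2*pi*(t + of_int n)) = Ak (1/2) (2*pi*t) + 2*pi * of_int n"
    using Ak_2pi_int[of "1/2" "2*pi*t" n] by (simp add: algebra_simps)
  have h2: "Ak 2 (pi/2 - Ak (1/2) (2*pi*t) + 2*pi * of_int (-n)) = Ak 2 (pi/2 - Ak (1/2) (2*pi*t)) + 2*pi * of_int (-n)"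
    by (rule Ak_2pi_int)
  have "s2 (t + of_int n) = Ak 2 (pi/2 - Ak (1/2) (2*pi*t) + 2*pi * of_int (-n)) / (2*pi)"
    unfolding s2_def h1 by (simp add: algebra_simps)
  also have "\<dots> = (Ak 2 (pi/2 - Ak (1/2) (2*pi*t)) - 2*pi * of_int n) / (2*pi)"
    unfolding h2 by simp
  also have "\<dots> = s2 t - of_int n" unfolding s2_def by (simp add: field_simps)
  finally show ?thesis .
qed

lemma s2_1: "s2 (t + 1) = s2 t - 1"
  using s2_int[of t 1] by simp

lemma s2_decr: "x < y \<Longrightarrow> s2 y < s2 x"
  unfolding s2_def using Ak_mono_iff[of 2] Ak_mono_iff[of "1/2"]
  by (simp add: divide_strict_right_mono)

lemma s2_cont: "continuous_on UNIV s2"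
  unfolding s2_def
  by (intro continuous_intros continuous_on_compose2[OF Ak_cont[of 2]] continuous_on_compose2[OF Ak_cont[of "1/2"]]) auto

lemma u2_alt: "u2 t = cos (Ak (1/2) (2*pi*t)) + sin (Ak (1/2) (2*pi*t))"
proof -
  define c where "c = cos (2*pi*t)"
  define s where "s = sin (2*pi*t)"
  have cs: "c\<^sup>2 + s\<^sup>2 = 1" unfolding c_def s_def by simp
  have e: "c\<^sup>2 + (1/2)\<^sup>2 * s\<^sup>2 = (1 + 3 * c\<^sup>2) / 4" using cs by (simp add: field_simps)
  have p: "1 + 3 * c\<^sup>2 > 0" by (simp add: add_pos_nonneg)
  have sq: "sqrt (c\<^sup>2 + (1/2)\<^sup>2 * s\<^sup>2) = sqrt (1 + 3 * c\<^sup>2) / 2"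
    unfolding e by (simp add: real_sqrt_divide)
  have cA: "cos (Ak (1/2) (2*pi*t)) = 2 * c / sqrt (1 + 3 * c\<^sup>2)"
    using Ak_cos_sin(1)[of "1/2" "2*pi*t"] unfolding c_def[symmetric] s_def[symmetric] sq by simp
  have sA: "sin (Ak (1/2) (2*pi*t)) = s / sqrt (1 + 3 * c\<^sup>2)"
    using Ak_cos_sin(2)[of "1/2" "2*pi*t"] unfolding c_def[symmetric] s_def[symmetric] sq by simp
  show ?thesis unfolding cA sA u2_def c_def[symmetric] s_def[symmetric] by (simp add: add_divide_distrib)
qed

lemma int_shift: "(\<exists>n::int. s = t + of_int n) \<longleftrightarrow> s - t \<in> \<int>"
  by (metis Ints_cases Ints_of_int add_diff_cancel_left' add.commute diff_add_cancel)

lemma u1_level: "u1 s = u1 t \<longleftrightarrow> (\<exists>n::int. s = t + of_int n) \<or> (\<exists>n::int. s = s1 t + of_int n)"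
proof -
  have "u1 s = u1 t \<longleftrightarrow> cos (2 * pi * s + pi / 4) = cos (2 * pi * t + pi / 4)"
    unfolding u1_def cos_minus_sin by simp
  also have "\<dots> \<longleftrightarrow> (\<exists>n\<in>\<int>. 2 * pi * s + pi/4 = (2*pi*t + pi/4) + 2*n*pi \<or> 2 * pi * s + pi/4 = -(2*pi*t + pi/4) + 2*n*pi)"
    by (rule cos_eq)
  also have "\<dots> \<longleftrightarrow> (\<exists>n\<in>\<int>. s = t + n \<or> s = s1 t + n)"
  proof -
    have "\<And>n. (2 * pi * s + pi/4 = (2*pi*t + pi/4) + 2*n*pi) \<longleftrightarrow> 2 * pi * s = 2*pi*t + 2*pi*n"
      by (auto simp: algebra_simps)
    then have a: "\<And>n. (2 * pi * s + pi/4 = (2*pi*t + pi/4) + 2*n*pi) \<longleftrightarrow> s = t + n"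
      by (simp only: cancel2pi)
    have "\<And>n. (2 * pi * s + pi/4 = -(2*pi*t + pi/4) + 2*n*pi) \<longleftrightarrow> 2 * pi * s = 2*pi*(s1 t) + 2*pi*n"
      unfolding s1_def by (auto simp: algebra_simps)
    then have b: "\<And>n. (2 * pi * s + pi/4 = -(2*pi*t + pi/4) + 2*n*pi) \<longleftrightarrow> s = s1 t + n"
      by (simp only: cancel2pi)
    show ?thesis using a b by simp
  qed
  also have "\<dots> \<longleftrightarrow> (\<exists>n::int. s = t + of_int n) \<or> (\<exists>n::int. s = s1 t + of_int n)"
    by (auto elim!: Ints_cases)
  finally show ?thesis .
qed

lemma u2_level: "u2 s = u2 t \<longleftrightarrow> (\<exists>n::int. s = t + of_int n) \<or> (\<exists>n::int. s = s2 t + of_int n)"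
proof -
  define A where "A x = Ak (1/2) (2*pi*x)" for x
  have "u2 s = u2 t \<longleftrightarrow> cos (A s - pi/4) = cos (A t - pi/4)"
    unfolding u2_alt cos_plus_sin A_def by simp
  also have "\<dots> \<longleftrightarrow> (\<exists>n\<in>\<int>. A s - pi/4 = (A t - pi/4) + 2*n*pi \<or> A s - pi/4 = -(A t - pi/4) + 2*n*pi)"
    by (rule cos_eq)
  also have "\<dots> \<longleftrightarrow> (\<exists>n::int. A s = A t + 2*pi* of_int n \<or> A s = (pi/2 - A t) + 2*pi* of_int n)"
    by (auto elim!: Ints_cases simp: algebra_simps)
  also have "\<dots> \<longleftrightarrow> (\<exists>n::int. s = t + of_int n \<or> s = s2 t + of_int n)"
  proof -
    have inv: "Ak 2 (A x) = 2*pi*x" for x unfolding A_def using Ak_inv[of 2] by simp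
    have "(A s = A t + 2*pi* of_int n) \<longleftrightarrow> s = t + of_int n" for n
    proof
      assume "A s = A t + 2*pi* of_int n"
      then have "Ak 2 (A s) = Ak 2 (A t) + 2*pi* of_int n" using Ak_2pi_int by simp
      then show "s = t + of_int n" unfolding inv by (simp add: cancel2pi)
    next
      assume "s = t + of_int n"
      then show "A s = A t + 2*pi* of_int n" unfolding A_def using Ak_2pi_int[of "1/2" "2*pi*t" n]
        by (simp add: algebra_simps)
    qed
    moreover have "(A s = (pi/2 - A t) + 2*pi* of_int n) \<longleftrightarrow> s = s2 t + of_int n" for n
    proof
      assume "A s = (pi/2 - A t) + 2*pi* of_int n"
      then have "Ak 2 (A s) = Ak 2 (pi/2 - A t) + 2*pi* of_int n" using Ak_2pi_int by simp
      then have "2 * pi * s = 2 * pi * s2 t + 2 * pi * of_int n" using inv unfolding s2_def A_def by simp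
      then show "s = s2 t + of_int n" by (simp only: cancel2pi)
    next
      assume "s = s2 t + of_int n"
      then have "2 * pi * s = Ak 2 (pi/2 - A t) + 2*pi* of_int n" unfolding s2_def A_def by (simp add: field_simps)
      then have "A s = Ak (1/2) (Ak 2 (pi/2 - A t) + 2*pi* of_int n)" unfolding A_def by simp
      then show "A s = (pi/2 - A t) + 2*pi* of_int n" using Ak_2pi_int[of "1/2"] Ak_inv'[of 2] by simp
    qed
    ultimately show ?thesis by simp
  qed
  finally show ?thesis by blast
qed

lemma s1_decr: "x < y \<Longrightarrow> s1 y < s1 x" unfolding s1_def by simp

lemma FF_mono: "x < y \<Longrightarrow> FF x < FF y"
  unfolding FF_def using s1_decr s2_decr by blast

lemma FF_strict_mono: "strict_mono FF"
  using FF_mono by (simp add: strict_monoI)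

lemma FF_mono_le: "x \<le> y \<Longrightarrow> FF x \<le> FF y"
  using FF_mono by (cases "x = y") (auto simp: less_eq_real_def)

lemma FF_cont: "continuous_on UNIV FF"
  unfolding FF_def s1_def
  by (intro continuous_on_compose2[OF s2_cont] continuous_intros) auto

lemma FF_int: "FF (t + of_int n) = FF t + of_int n"
proof -
  have "s1 (t + of_int n) = s1 t + of_int (-n)" unfolding s1_def by simp
  then show ?thesis unfolding FF_def using s2_int[of "s1 t" "-n"] by simp
qed

lemma FF_1: "FF (t + 1) = FF t + 1" using FF_int[of t 1] by simp

lemma FF_quarter: "FF (of_int j / 4) = of_int j / 4 + 1/2"
proof -
  have "2 * pi * s1 (of_int j / 4) = of_int (-j - 1) * (pi/2)" unfolding s1_def by (simp add: field_simps)
  then have a: "Ak (1/2) (2 * pi * s1 (of_int j / 4)) = of_int (-j - 1) * (pi/2)" by (simp only: Ak_multpi2)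
  have b: "pi/2 - of_int (-j - 1) * (pi/2) = of_int (j + 2) * (pi/2)" by (simp add: field_simps)
  have "Ak 2 (pi/2 - Ak (1/2) (2 * pi * s1 (of_int j / 4))) = of_int (j + 2) * (pi/2)"
    by (simp only: a b Ak_multpi2)
  then show ?thesis unfolding FF_def s2_def by (simp add: field_simps)
qed

lemma FF_vec: "\<exists>l>0. cos (2*pi*FF t) = - l * cos (2*pi*t) \<and> sin (2*pi*FF t) = - 4 * l * sin (2*pi*t)"
proof -
  define c where "c = cos (2*pi*t)"
  define s where "s = sin (2*pi*t)"
  define x1 where "x1 = 2 * pi * s1 t"
  have cx1: "cos x1 = - s" and sx1: "sin x1 = - c"
    unfolding x1_def s1_def c_def s_def by (simp_all add: algebra_simps cos_add sin_add cos_diff sin_diff)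
  define y where "y = Ak (1/2) x1"
  define r1 where "r1 = sqrt ((cos x1)\<^sup>2 + (1/2)\<^sup>2 * (sin x1)\<^sup>2)"
  have r1: "r1 > 0" unfolding r1_def using Ak_den2_pos[of "1/2" x1] by simp
  have cy: "cos y = - s / r1" and sy: "sin y = - c / (2 * r1)"
    unfolding y_def r1_def using Ak_cos_sin[of "1/2" x1] cx1 sx1 by auto
  define z where "z = pi/2 - y"
  have cz: "cos z = - c / (2 * r1)" and sz: "sin z = - s / r1"
    unfolding z_def using cy sy by (simp_all add: cos_diff sin_diff)
  define r2 where "r2 = sqrt ((cos z)\<^sup>2 + 2\<^sup>2 * (sin z)\<^sup>2)"
  have r2: "r2 > 0" unfolding r2_def using Ak_den2_pos[of 2 z] by simp
  have w: "2*pi*FF t = Ak 2 z" unfolding FF_def s2_def z_def y_def x1_def by simp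
  have cw: "cos (2*pi*FF t) = - c / (2 * r1 * r2)" and sw: "sin (2*pi*FF t) = - 4 * s / (2 * r1 * r2)"
    unfolding w r2_def[symmetric] using Ak_cos_sin[of 2 z] cz sz r1 r2 unfolding r2_def[symmetric]
    by (auto simp: field_simps)
  show ?thesis
    by (rule exI[of _ "1 / (2 * r1 * r2)"]) (use r1 r2 cw sw in \<open>auto simp: c_def s_def field_simps\<close>)
qed

definition psi :: "real \<Rightarrow> real" where "psi t = FF (FF t) - 1"

lemma psi_fix: "psi t = t \<Longrightarrow> 4 * t \<in> \<int>"
proof -
  assume p: "psi t = t"
  obtain l where l: "l > 0" "cos (2*pi*FF t) = - l * cos (2*pi*t)" "sin (2*pi*FF t) = - 4 * l * sin (2*pi*t)"
    using FF_vec by blast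
  obtain l' where l': "l' > 0" "cos (2*pi*FF (FF t)) = - l' * cos (2*pi*FF t)" "sin (2*pi*FF (FF t)) = - 4 * l' * sin (2*pi*FF t)"
    using FF_vec by blast
  have e: "2*pi*FF (FF t) = 2*pi*t + 2*pi" using p unfolding psi_def by (simp add: algebra_simps)
  have c: "cos (2*pi*t) = (l' * l) * cos (2*pi*t)"
  proof -
    have "cos (2*pi*t) = cos (2*pi*FF (FF t))" using e by simp
    also have "\<dots> = (l' * l) * cos (2*pi*t)" using l l' by simp
    finally show ?thesis .
  qed
  have s: "sin (2*pi*t) = 16 * (l' * l) * sin (2*pi*t)"
  proof -
    have "sin (2*pi*t) = sin (2*pi*FF (FF t))" using e by simp
    also have "\<dots> = 16 * (l' * l) * sin (2*pi*t)" using l l' by simp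
    finally show ?thesis .
  qed
  have "sin (2*pi*t) * cos (2*pi*t) = 0"
  proof (cases "cos (2*pi*t) = 0")
    case False
    have "1 * cos (2*pi*t) = (l' * l) * cos (2*pi*t)" using c by simp
    then have "l' * l = 1" using False by (simp only: mult_cancel_right) simp
    then have "sin (2*pi*t) = 16 * sin (2*pi*t)" using s by simp
    then show ?thesis by simp
  qed simp
  then have "sin (2 * (2*pi*t)) = 0" by (subst sin_double) simp
  then obtain k :: int where "2 * (2*pi*t) = of_int k * pi" using sin_zero_iff_int2 by blast
  then have "4 * t = of_int k" by (simp add: field_simps)
  then show ?thesis by simp
qed

lemma FF_minus_not_int: "FF t - t \<notin> \<int>"
proof -
  define j where "j = floor (4 * t)"
  have j1: "of_int j / 4 \<le> t" and j2: "t \<le> of_int (j + 1) / 4"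
    unfolding j_def using floor_correct[of "4*t"] by (simp_all add: field_simps)
  have "FF t \<ge> of_int j / 4 + 1/2" using FF_mono_le[OF j1] FF_quarter[of j] by simp
  moreover have "FF t \<le> of_int (j + 1) / 4 + 1/2" using FF_mono_le[OF j2] FF_quarter[of "j + 1"] by simp
  ultimately have "1/4 \<le> FF t - t" "FF t - t \<le> 3/4" using j1 j2 by (simp_all add: field_simps)
  then show ?thesis
  proof (safe elim!: Ints_cases)
    fix k :: int assume "FF t - t = of_int k" "1/4 \<le> FF t - t" "FF t - t \<le> 3/4"
    then have "(0::real) < of_int k" "of_int k < (1::real)" by linarith+
    then show False by simp
  qed
qed


definition periodic1 :: "(real \<Rightarrow> complex) \<Rightarrow> bool" where
  "periodic1 h \<longleftrightarrow> (\<forall>x. h (x + 1) = h x)"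

lemma periodic1_int: "periodic1 h \<Longrightarrow> h (x + of_int k) = h x"
proof (induction k arbitrary: x rule: int_induct[where k = 0])
  case base then show ?case by simp
next
  case (step1 i) then show ?case unfolding periodic1_def by (metis add.assoc of_int_add of_int_1)
next
  case (step2 i)
  then have "h (x + of_int (i - 1) + 1) = h (x + of_int (i - 1))" unfolding periodic1_def by blast
  then show ?case using step2 by (simp add: algebra_simps)
qed

lemma shift_integral:
  assumes p: "periodic1 h"
  shows "(LINT x:((\<lambda>x. x + of_int k) -` E)|lborel. h x) = (LINT x:E|lborel. h x)"
    and "set_integrable lborel ((\<lambda>x. x + of_int k) -` E) h \<longleftrightarrow> set_integrable lborel E h"
proof -
  have eq: "(\<lambda>x. indicator E (of_int k + 1 * x) *\<^sub>R h (of_int k + 1 * x)) =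
        (\<lambda>x. indicator ((\<lambda>x. x + of_int k) -` E) x *\<^sub>R h x)"
    using periodic1_int[OF p] by (auto simp: indicator_def add.commute fun_eq_iff)
  show "(LINT x:((\<lambda>x. x + of_int k) -` E)|lborel. h x) = (LINT x:E|lborel. h x)"
    unfolding set_lebesgue_integral_def
    using lborel_integral_real_affine[of 1 "\<lambda>x. indicator E x *\<^sub>R h x" "of_int k"] eq by simp
  show "set_integrable lborel ((\<lambda>x. x + of_int k) -` E) h \<longleftrightarrow> set_integrable lborel E h"
    unfolding set_integrable_def
    using lborel_integrable_real_affine_iff[of 1 "\<lambda>x. indicator E x *\<^sub>R h x" "of_int k"] eq by simp
qed

lemma shift_interval: "(\<lambda>x::real. x + of_int k) -` {a..b} = {a - of_int k..b - of_int k}"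
  by (auto simp: algebra_simps)

lemma loc_int_nat:
  assumes p: "periodic1 h" and i: "set_integrable lborel {0..1} h"
  shows "set_integrable lborel {- real n..real n} h"
proof (induction n)
  case 0
  have "set_integrable lborel {0} h"
    by (rule set_integrable_subset[OF i]) auto
  then show ?case by simp
next
  case (Suc n)
  have e1: "(\<lambda>x. x + of_int (- int n)) -` {0..1::real} = {real n..real n + 1}" by auto
  have e2: "(\<lambda>x. x + of_int (int n + 1)) -` {0..1::real} = {- real n - 1..- real n}" by auto
  have a: "set_integrable lborel {real n..real n + 1} h"
    using shift_integral(2)[OF p, of "- int n" "{0..1}"] i by (simp only: e1)
  have b: "set_integrable lborel {- real n - 1..- real n} h"
    using shift_integral(2)[OF p, of "int n + 1" "{0..1}"] i by (simp only: e2)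
  have U: "set_integrable lborel ({- real n - 1..- real n} \<union> {- real n..real n} \<union> {real n..real n + 1}) h"
    by (intro set_integrable_Un a b Suc) auto
  have S: "{- real (Suc n)..real (Suc n)} \<subseteq> {- real n - 1..- real n} \<union> {- real n..real n} \<union> {real n..real n + 1}"
    by auto
  show ?case using set_integrable_subset[OF U _ S] by simp
qed

lemma loc_int:
  assumes p: "periodic1 h" and i: "set_integrable lborel {0..1} h"
    and E: "E \<in> sets borel" "E \<subseteq> {a..b}"
  shows "set_integrable lborel E h"
proof -
  obtain n :: nat where "real n \<ge> max \<bar>a\<bar> \<bar>b\<bar>" using real_arch_simple by blast
  then have "E \<subseteq> {- real n..real n}" using E by force
  then show ?thesis using E by (intro set_integrable_subset[OF loc_int_nat[OF p i, of n]]) auto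
qed

lemma AE_touch: "AE x in lborel. \<not> (x \<in> {a..b} \<and> x \<in> {b..c::real})"
  using AE_lborel_singleton[of b] by eventually_elim auto

lemma window:
  assumes p: "periodic1 h" and i: "set_integrable lborel {0..1} h"
  shows "(LINT x:{c..c+1}|lborel. h x) = (LINT x:{0..1}|lborel. h x)"
proof -
  define n where "n = floor c"
  define d where "d = c - of_int n"
  have d: "0 \<le> d" "d < 1" unfolding d_def n_def by linarith+
  have li: "set_integrable lborel {a..b} h" for a b by (rule loc_int[OF p i]) auto
  have e1: "(\<lambda>x. x + of_int n) -` {c..of_int n + 1} = {d..1}" unfolding d_def by auto
  have e2: "(\<lambda>x. x + of_int (n + 1)) -` {of_int n + 1..c + 1} = {0..d}" unfolding d_def by auto
  have "(LINT x:{c..c+1}|lborel. h x) = (LINT x:{c..of_int n + 1} \<union> {of_int n + 1..c+1}|lborel. h x)"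
  proof -
    have "{c..c+1} = {c..of_int n + 1} \<union> {of_int n + 1..c+1}" using d unfolding d_def by auto
    then show ?thesis by simp
  qed
  also have "\<dots> = (LINT x:{c..of_int n + 1}|lborel. h x) + (LINT x:{of_int n + 1..c+1}|lborel. h x)"
    by (rule set_integral_Un_AE[OF AE_touch _ _ li li]) auto
  also have "(LINT x:{c..of_int n + 1}|lborel. h x) = (LINT x:{d..1}|lborel. h x)"
    using shift_integral(1)[OF p, of n "{c..of_int n + 1}"] unfolding e1 by simp
  also have "(LINT x:{of_int n + 1..c+1}|lborel. h x) = (LINT x:{0..d}|lborel. h x)"
    using shift_integral(1)[OF p, of "n + 1" "{of_int n + 1..c+1}"] unfolding e2 by simp
  also have "(LINT x:{d..1}|lborel. h x) + (LINT x:{0..d}|lborel. h x) = (LINT x:{0..d} \<union> {d..1}|lborel. h x)"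
    using set_integral_Un_AE[OF AE_touch _ _ li li, of 0 d 1] by (simp add: add.commute)
  also have "{0..d} \<union> {d..1} = {0..1::real}" using d by auto
  finally show ?thesis .
qed

lemma set_int_ind: "(LINT x:S|M. indicator T x *\<^sub>R (f x :: complex)) = (LINT x:S \<inter> T|M. f x)"
  unfolding set_lebesgue_integral_def
  by (rule Bochner_Integration.integral_cong) (auto split: split_indicator)

lemma set_intble_ind: "set_integrable M S (\<lambda>x. indicator T x *\<^sub>R (f x :: complex)) \<longleftrightarrow> set_integrable M (S \<inter> T) f"
  unfolding set_integrable_def
  by (simp add: indicator_inter_arith)

lemma periodic1_ind:
  assumes "periodic1 g" "\<And>x. u (x + 1) = u x"
  shows "periodic1 (\<lambda>x. indicator (u -` B) x *\<^sub>R g x)"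
  using assms unfolding periodic1_def by (simp add: indicator_def)

lemma window_pre:
  fixes g :: "real \<Rightarrow> complex" and u :: "real \<Rightarrow> real"
  assumes p: "periodic1 g" and i: "set_integrable lborel {0..1} g"
    and um: "u \<in> borel_measurable borel" and up: "\<And>x. u (x + 1) = u x"
    and P0: "(LINT x:{0..1} \<inter> u -` B|lborel. g x) = 0" and B: "B \<in> sets borel"
  shows "(LINT x:{c..c+1} \<inter> u -` B|lborel. g x) = 0"
proof -
  have uB: "u -` B \<in> sets borel" using measurable_sets_borel[OF um B] by simp
  have "set_integrable lborel ({0..1} \<inter> u -` B) g"
    by (rule set_integrable_subset[OF i]) (use uB in auto)
  then have i2: "set_integrable lborel {0..1} (\<lambda>x. indicator (u -` B) x *\<^sub>R g x)"
    by (simp add: set_intble_ind)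
  have "(LINT x:{c..c+1} \<inter> u -` B|lborel. g x) = (LINT x:{c..c+1}|lborel. indicator (u -` B) x *\<^sub>R g x)"
    by (simp add: set_int_ind)
  also have "\<dots> = (LINT x:{0..1}|lborel. indicator (u -` B) x *\<^sub>R g x)"
    by (rule window[OF periodic1_ind[of g u B, OF p up] i2])
  also have "\<dots> = 0" using P0 by (simp add: set_int_ind)
  finally show ?thesis .
qed

lemma sig_base:
  fixes g :: "real \<Rightarrow> complex" and u \<sigma> :: "real \<Rightarrow> real" and a :: real
  assumes p: "periodic1 g" and i: "set_integrable lborel {0..1} g"
    and uc: "continuous_on UNIV u" and sc: "continuous_on UNIV \<sigma>"
    and inv: "\<And>x. \<sigma> (\<sigma> x) = x"
    and dec: "\<And>x y. x < y \<Longrightarrow> \<sigma> y < \<sigma> x"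
    and sa: "\<sigma> a = a" and sb: "\<sigma> (a + 1/2) = a - 1/2"
    and lev: "\<And>s t. u s = u t \<longleftrightarrow> (\<exists>n::int. s = t + of_int n) \<or> (\<exists>n::int. s = \<sigma> t + of_int n)"
    and P0: "\<And>B. B \<in> sets borel \<Longrightarrow> (LINT x:{0..1} \<inter> u -` B|lborel. g x) = 0"
    and E: "E \<in> sets borel" "E \<subseteq> {a..a+1/2}"
  shows "(LINT x:\<sigma> -` E|lborel. g x) = - (LINT x:E|lborel. g x)"
proof -
  define b where "b = a + 1/2"
  have sb': "\<sigma> (a - 1/2) = b" using sb inv unfolding b_def by metis
  have decle: "x \<le> y \<Longrightarrow> \<sigma> y \<le> \<sigma> x" for x y using dec by (cases "x = y") (auto simp: less_eq_real_def)
  have decle_iff: "\<sigma> y \<le> \<sigma> x \<longleftrightarrow> x \<le> y" for x y using decle dec by (meson not_le)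
  have up: "u (x + 1) = u x" for x using lev[of "x + 1" x] by (metis of_int_1)
  have um[measurable]: "u \<in> borel_measurable borel" using uc by (rule borel_measurable_continuous_onI)
  have sm[measurable]: "\<sigma> \<in> borel_measurable borel" using sc by (rule borel_measurable_continuous_onI)
  have Em[measurable]: "E \<in> sets borel" using E by simp
  have sEm: "\<sigma> -` E \<in> sets borel" using measurable_sets_borel[OF sm Em] by simp
  have uinj: "inj_on u {a..b}"
  proof (rule inj_onI)
    fix s t assume st: "s \<in> {a..b}" "t \<in> {a..b}" "u s = u t"
    then consider (A) n :: int where "s = t + of_int n" | (B) n :: int where "s = \<sigma> t + of_int n"
      using lev by blast
    then show "s = t"
    proof cases
      case A
      then have "\<bar>of_int n\<bar> \<le> (1/2::real)" using st unfolding b_def by auto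
      then have "n = 0" by linarith
      then show ?thesis using A by simp
    next
      case B
      have "\<sigma> t \<le> a" using decle[of a t] st sa by auto
      moreover have "a - 1/2 \<le> \<sigma> t" using decle[of t b] st sb unfolding b_def by auto
      ultimately have "0 \<le> (of_int n::real)" "of_int n \<le> (1::real)" using B st unfolding b_def by auto
      then have "n = 0 \<or> n = 1" by linarith
      then show ?thesis
      proof
        assume "n = 0"
        then have "s = \<sigma> t" using B by simp
        then have "s = a" "\<sigma> t = a" using \<open>\<sigma> t \<le> a\<close> st by auto
        then have "t = a" using inv sa by metis
        then show ?thesis using \<open>s = a\<close> by simp
      next
        assume "n = 1"
        then have "s = \<sigma> t + 1" using B by simp
        then have "\<sigma> t = a - 1/2" "s = b" using \<open>a - 1/2 \<le> \<sigma> t\<close> st unfolding b_def by auto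
        then have "t = b" using inv sb' by metis
        then show ?thesis using \<open>s = b\<close> by simp
      qed
    qed
  qed
  define w where "w = the_inv_into {a..b} u"
  define K where "K = u ` {a..b}"
  have wu: "w (u x) = x" if "x \<in> {a..b}" for x unfolding w_def using the_inv_into_f_f[OF uinj that] .
  have wc: "continuous_on K w" unfolding K_def
    by (rule continuous_on_inv[OF continuous_on_subset[OF uc]]) (auto simp: wu)
  have Kc: "compact K" unfolding K_def by (rule compact_continuous_image[OF continuous_on_subset[OF uc]]) auto
  then have Kb: "K \<in> sets borel" by (simp add: compact_imp_closed borel_closed)
  have wm: "(\<lambda>y. indicator K y *\<^sub>R w y) \<in> borel_measurable borel"
    by (rule borel_measurable_continuous_on_indicator[OF Kb wc])
  have uE: "u ` E = K \<inter> (\<lambda>y. indicator K y *\<^sub>R w y) -` E"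
  proof
    show "u ` E \<subseteq> K \<inter> (\<lambda>y. indicator K y *\<^sub>R w y) -` E"
    proof
      fix y assume "y \<in> u ` E"
      then obtain e where e: "e \<in> E" "y = u e" by auto
      then have "e \<in> {a..b}" using E unfolding b_def by auto
      then show "y \<in> K \<inter> (\<lambda>y. indicator K y *\<^sub>R w y) -` E" using e wu unfolding K_def by auto
    qed
    show "K \<inter> (\<lambda>y. indicator K y *\<^sub>R w y) -` E \<subseteq> u ` E"
    proof
      fix y assume y: "y \<in> K \<inter> (\<lambda>y. indicator K y *\<^sub>R w y) -` E"
      then obtain x where x: "x \<in> {a..b}" "y = u x" unfolding K_def by auto
      then have "w y = x" using wu by simp
      then have "x \<in> E" using y by auto
      then show "y \<in> u ` E" using x by auto
    qed
  qed
  have uEb: "u ` E \<in> sets borel" unfolding uE using measurable_sets_borel[OF wm Em] Kb by auto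
  have key: "{b - 1..b} \<inter> u -` (u ` E) = E \<union> \<sigma> -` E"
  proof
    show "E \<union> \<sigma> -` E \<subseteq> {b - 1..b} \<inter> u -` (u ` E)"
    proof
      fix x assume "x \<in> E \<union> \<sigma> -` E"
      then show "x \<in> {b - 1..b} \<inter> u -` (u ` E)"
      proof
        assume "x \<in> E" then show ?thesis using E unfolding b_def by auto
      next
        assume x: "x \<in> \<sigma> -` E"
        then have sx: "\<sigma> x \<in> {a..b}" using E unfolding b_def by auto
        have "\<sigma> a \<le> \<sigma> x" using sx sa by simp
        then have "x \<le> a" using decle_iff by blast
        moreover have "\<sigma> x \<le> \<sigma> (a - 1/2)" using sx sb' by simp
        then have "a - 1/2 \<le> x" using decle_iff by blast
        moreover have "u x = u (\<sigma> x)" using lev[of x "\<sigma> x"] inv by (metis add_0_right of_int_0)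
        ultimately show ?thesis using x unfolding b_def by auto
      qed
    qed
    show "{b - 1..b} \<inter> u -` (u ` E) \<subseteq> E \<union> \<sigma> -` E"
    proof
      fix x assume x: "x \<in> {b - 1..b} \<inter> u -` (u ` E)"
      then obtain e where e: "e \<in> E" "u x = u e" by auto
      have eab: "a \<le> e" "e \<le> b" using e E unfolding b_def by auto
      consider (A) n :: int where "x = e + of_int n" | (B) n :: int where "x = \<sigma> e + of_int n"
        using lev e by blast
      then show "x \<in> E \<union> \<sigma> -` E"
      proof cases
        case A
        then have "-1 \<le> (of_int n::real)" "of_int n \<le> (1/2::real)" using x eab unfolding b_def by auto
        then have "n = -1 \<or> n = 0" by linarith
        then show ?thesis
        proof
          assume "n = 0" then show ?thesis using A e by simp
        next
          assume "n = -1"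
          then have "x = e - 1" using A by simp
          then have "e = b" "x = a - 1/2" using x eab unfolding b_def by auto
          then have "\<sigma> x = e" using sb' by simp
          then show ?thesis using e by simp
        qed
      next
        case B
        have se1: "\<sigma> e \<le> a" using decle[OF eab(1)] sa by simp
        have se2: "a - 1/2 \<le> \<sigma> e" using decle[OF eab(2)] sb unfolding b_def by simp
        have "-1/2 \<le> (of_int n::real)" "of_int n \<le> (1::real)" using B x se1 se2 unfolding b_def by auto
        then have "n = 0 \<or> n = 1" by linarith
        then show ?thesis
        proof
          assume "n = 0" then have "\<sigma> x = e" using B inv by simp
          then show ?thesis using e by simp
        next
          assume "n = 1"
          then have "\<sigma> e = a - 1/2" "x = b" using B x se2 unfolding b_def by auto
          then have "e = b" using inv sb' by metis
          then show ?thesis using e \<open>x = b\<close> by simp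
        qed
      qed
    qed
  qed
  have zero: "(LINT x:{b - 1..b} \<inter> u -` (u ` E)|lborel. g x) = 0"
    using window_pre[OF p i um up P0[OF uEb] uEb, of "b - 1"] by simp
  have iE: "set_integrable lborel E g" by (rule loc_int[OF p i Em E(2)])
  have sE_sub: "\<sigma> -` E \<subseteq> {a - 1/2..a}"
  proof
    fix x assume x: "x \<in> \<sigma> -` E"
    then have sx: "\<sigma> x \<in> {a..a+1/2}" using E by auto
    have "\<sigma> a \<le> \<sigma> x" using sx sa by simp
    then have "x \<le> a" using decle_iff by blast
    moreover have "\<sigma> x \<le> \<sigma> (a - 1/2)" using sx sb' unfolding b_def by simp
    then have "a - 1/2 \<le> x" using decle_iff by blast
    ultimately show "x \<in> {a - 1/2..a}" by simp
  qed
  have isE: "set_integrable lborel (\<sigma> -` E) g" by (rule loc_int[OF p i sEm sE_sub])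
  have ov: "AE x in lborel. \<not> (x \<in> E \<and> x \<in> \<sigma> -` E)"
    using AE_lborel_singleton[of a]
  proof eventually_elim
    case (elim x)
    show ?case
    proof
      assume "x \<in> E \<and> x \<in> \<sigma> -` E"
      then have "a \<le> x" "x \<le> a" using E sE_sub by auto
      then show False using elim by simp
    qed
  qed
  have "(LINT x:E \<union> \<sigma> -` E|lborel. g x) = (LINT x:E|lborel. g x) + (LINT x:\<sigma> -` E|lborel. g x)"
    by (rule set_integral_Un_AE[OF ov _ _ iE isE]) (use sEm in auto)
  then show ?thesis using zero key by (simp add: eq_neg_iff_add_eq_0 add.commute)
qed

locale sigctx =
  fixes g :: "real \<Rightarrow> complex" and u \<sigma> :: "real \<Rightarrow> real" and a :: real
  assumes p: "periodic1 g" and i: "set_integrable lborel {0..1} g"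
    and uc: "continuous_on UNIV u" and sc: "continuous_on UNIV \<sigma>"
    and inv: "\<And>x. \<sigma> (\<sigma> x) = x"
    and dec: "\<And>x y. x < y \<Longrightarrow> \<sigma> y < \<sigma> x"
    and sa: "\<sigma> a = a" and sb: "\<sigma> (a + 1/2) = a - 1/2"
    and s1p: "\<And>x. \<sigma> (x + 1) = \<sigma> x - 1"
    and lev: "\<And>s t. u s = u t \<longleftrightarrow> (\<exists>n::int. s = t + of_int n) \<or> (\<exists>n::int. s = \<sigma> t + of_int n)"
    and P0: "\<And>B. B \<in> sets borel \<Longrightarrow> (LINT x:{0..1} \<inter> u -` B|lborel. g x) = 0"
begin

lemma base: "E \<in> sets borel \<Longrightarrow> E \<subseteq> {a..a+1/2} \<Longrightarrow> (LINT x:\<sigma> -` E|lborel. g x) = - (LINT x:E|lborel. g x)"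
  by (rule sig_base[OF p i uc sc inv dec sa sb lev P0])

lemma decle: "x \<le> y \<Longrightarrow> \<sigma> y \<le> \<sigma> x" using dec by (cases "x = y") (auto simp: less_eq_real_def)
lemma decle_iff: "\<sigma> y \<le> \<sigma> x \<longleftrightarrow> x \<le> y" using decle dec by (meson not_le)
lemma sm: "\<sigma> \<in> borel_measurable borel" using sc by (rule borel_measurable_continuous_onI)
lemma pre_borel: "E \<in> sets borel \<Longrightarrow> \<sigma> -` E \<in> sets borel" using measurable_sets_borel[OF sm] by simp
lemma pre_sub: "E \<subseteq> {c..d} \<Longrightarrow> \<sigma> -` E \<subseteq> {\<sigma> d..\<sigma> c}"
proof
  fix x assume E: "E \<subseteq> {c..d}" and x: "x \<in> \<sigma> -` E"
  then have "c \<le> \<sigma> x" "\<sigma> x \<le> d" by auto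
  then have "\<sigma> (\<sigma> c) \<le> \<sigma> x" "\<sigma> x \<le> \<sigma> (\<sigma> d)" using inv by auto
  then show "x \<in> {\<sigma> d..\<sigma> c}" using decle_iff by auto
qed
lemma sb': "\<sigma> (a - 1/2) = a + 1/2" using sb inv by metis

lemma sig_A: "E \<in> sets borel \<Longrightarrow> E \<subseteq> {a - 1/2..a} \<Longrightarrow> (LINT x:\<sigma> -` E|lborel. g x) = - (LINT x:E|lborel. g x)"
proof -
  assume E: "E \<in> sets borel" "E \<subseteq> {a - 1/2..a}"
  have "\<sigma> -` E \<subseteq> {a..a+1/2}" using pre_sub[OF E(2)] sa sb' by simp
  then have "(LINT x:\<sigma> -` (\<sigma> -` E)|lborel. g x) = - (LINT x:\<sigma> -` E|lborel. g x)"
    using base pre_borel[OF E(1)] by blast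
  moreover have "\<sigma> -` (\<sigma> -` E) = E" using inv by auto
  ultimately show ?thesis by simp
qed

lemma s_int: "\<sigma> (x + of_int k) = \<sigma> x - of_int k"
proof (induction k arbitrary: x rule: int_induct[where k = 0])
  case base then show ?case by simp
next
  case (step1 i)
  have "\<sigma> (x + of_int (i + 1)) = \<sigma> ((x + of_int i) + 1)" by (simp add: algebra_simps)
  also have "\<dots> = \<sigma> (x + of_int i) - 1" by (rule s1p)
  also have "\<dots> = \<sigma> x - of_int (i + 1)" using step1 by simp
  finally show ?case .
next
  case (step2 i)
  have "\<sigma> (x + of_int (i - 1) + 1) = \<sigma> (x + of_int (i - 1)) - 1" by (rule s1p)
  moreover have "x + of_int (i - 1) + 1 = x + of_int i" by simp
  ultimately have "\<sigma> (x + of_int i) = \<sigma> (x + of_int (i - 1)) - 1" by simp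
  then show ?case using step2 by simp
qed

lemma sig_B:
  assumes E: "E \<in> sets borel" "E \<subseteq> {a + of_int j / 2..a + of_int j / 2 + 1/2}"
  shows "(LINT x:\<sigma> -` E|lborel. g x) = - (LINT x:E|lborel. g x)"
proof -
  define k where "k = (j + 1) div 2"
  define E' where "E' = (\<lambda>x. x + of_int k) -` E"
  have "(\<lambda>x::real. x + of_int k) \<in> borel_measurable borel" by measurable
  then have E'b: "E' \<in> sets borel" unfolding E'_def using measurable_sets_borel[OF _ E(1)] by blast
  have nuE: "(LINT x:E'|lborel. g x) = (LINT x:E|lborel. g x)" unfolding E'_def by (rule shift_integral(1)[OF p])
  have sE': "\<sigma> -` E' = (\<lambda>x. x + of_int (-k)) -` (\<sigma> -` E)"
  proof -
    have "\<sigma> x + of_int k = \<sigma> (x + of_int (-k))" for x using s_int[of x "-k"] by simp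
    then show ?thesis unfolding E'_def by auto
  qed
  have nusE: "(LINT x:\<sigma> -` E'|lborel. g x) = (LINT x:\<sigma> -` E|lborel. g x)"
    unfolding sE' by (rule shift_integral(1)[OF p])
  have "j = 2 * k \<or> j = 2 * k - 1" unfolding k_def by presburger
  then have "(LINT x:\<sigma> -` E'|lborel. g x) = - (LINT x:E'|lborel. g x)"
  proof
    assume j: "j = 2 * k"
    have "E' \<subseteq> {a..a+1/2}" using E(2) unfolding E'_def j by (auto simp: field_simps)
    then show ?thesis using base E'b by blast
  next
    assume j: "j = 2 * k - 1"
    have "E' \<subseteq> {a - 1/2..a}" using E(2) unfolding E'_def j by (auto simp: field_simps)
    then show ?thesis using sig_A E'b by blast
  qed
  then show ?thesis using nuE nusE by simp
qed

lemma sig_gen: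
  assumes E: "E \<in> sets borel" "E \<subseteq> {c..c + 1/2}"
  shows "(LINT x:\<sigma> -` E|lborel. g x) = - (LINT x:E|lborel. g x)"
proof -
  define j where "j = ceiling (2 * (c - a))"
  define q where "q = a + of_int j / 2"
  have q: "c \<le> q" "q < c + 1/2" unfolding q_def j_def
    using ceiling_correct[of "2 * (c - a)"] by (simp_all add: field_simps) linarith+
  define E1 where "E1 = E \<inter> {..<q}"
  define E2 where "E2 = E \<inter> {q..}"
  have E1b: "E1 \<in> sets borel" and E2b: "E2 \<in> sets borel" unfolding E1_def E2_def using E(1) by auto
  have E1s: "E1 \<subseteq> {a + of_int (j - 1) / 2..a + of_int (j - 1) / 2 + 1/2}"
    using E(2) q unfolding E1_def q_def by (auto simp: field_simps)
  have E2s: "E2 \<subseteq> {a + of_int j / 2..a + of_int j / 2 + 1/2}"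
    using E(2) q unfolding E2_def q_def by (auto simp: field_simps)
  have E12: "E = E1 \<union> E2" "E1 \<inter> E2 = {}" unfolding E1_def E2_def by auto
  have sE12: "\<sigma> -` E = \<sigma> -` E1 \<union> \<sigma> -` E2" "\<sigma> -` E1 \<inter> \<sigma> -` E2 = {}"
    using E12 by auto
  have ib: "set_integrable lborel S g" if "S \<in> sets borel" "S \<subseteq> {x..y}" for S x y
    by (rule loc_int[OF p i that])
  have iE1: "set_integrable lborel E1 g" using ib[OF E1b] E1s by blast
  have iE2: "set_integrable lborel E2 g" using ib[OF E2b] E2s by blast
  have isE1: "set_integrable lborel (\<sigma> -` E1) g" using ib[OF pre_borel[OF E1b] pre_sub[OF E1s]] .
  have isE2: "set_integrable lborel (\<sigma> -` E2) g" using ib[OF pre_borel[OF E2b] pre_sub[OF E2s]] .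
  have "(LINT x:\<sigma> -` E|lborel. g x) = (LINT x:\<sigma> -` E1|lborel. g x) + (LINT x:\<sigma> -` E2|lborel. g x)"
    unfolding sE12(1) by (rule set_integral_Un[OF sE12(2) isE1 isE2])
  also have "\<dots> = - (LINT x:E1|lborel. g x) - (LINT x:E2|lborel. g x)"
    using sig_B[OF E1b E1s] sig_B[OF E2b E2s] by simp
  also have "\<dots> = - (LINT x:E|lborel. g x)"
    unfolding E12(1) set_integral_Un[OF E12(2) iE1 iE2] by simp
  finally show ?thesis .
qed

end


lemma zero_real:
  fixes F :: "real \<Rightarrow> real"
  assumes Fi: "integrable lborel F"
    and z: "\<And>E. E \<in> sets borel \<Longrightarrow> (\<integral>x. indicator E x * F x \<partial>lborel) = 0"
  shows "AE x in lborel. F x = 0"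
proof -
  have Fm[measurable]: "F \<in> borel_measurable borel" using Fi by (simp add: measurable_completion)
  define E1 where "E1 = {x. 0 < F x}"
  define E2 where "E2 = {x. F x < 0}"
  have [measurable]: "E1 \<in> sets borel" "E2 \<in> sets borel" unfolding E1_def E2_def by measurable
  have i1: "integrable lborel (\<lambda>x. indicator E1 x * F x)"
    using Fi by (subst mult.commute) (rule integrable_real_mult_indicator, auto)
  have i2: "integrable lborel (\<lambda>x. - (indicator E2 x * F x))"
    using Fi by (intro integrable_minus) (subst mult.commute, rule integrable_real_mult_indicator, auto)
  have "AE x in lborel. indicator E1 x * F x = 0"
    using z[of E1] i1 by (subst integral_nonneg_eq_0_iff_AE[symmetric]) (auto simp: E1_def indicator_def)
  moreover have "AE x in lborel. - (indicator E2 x * F x) = 0"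
    using z[of E2] i2 by (subst integral_nonneg_eq_0_iff_AE[symmetric]) (auto simp: E2_def indicator_def)
  ultimately show ?thesis
    by eventually_elim (auto simp: E1_def E2_def indicator_def split: if_splits)
qed

lemma zero_set:
  fixes g :: "real \<Rightarrow> complex"
  assumes D: "D \<in> sets borel" and gi: "set_integrable lborel D g"
    and z: "\<And>E. E \<in> sets borel \<Longrightarrow> E \<subseteq> D \<Longrightarrow> (LINT x:E|lborel. g x) = 0"
  shows "AE x in lborel. x \<in> D \<longrightarrow> g x = 0"
proof -
  define f where "f x = indicator D x *\<^sub>R g x" for x
  have fi: "integrable lborel f" using gi unfolding f_def set_integrable_def .
  have zf: "(\<integral>x. indicator E x *\<^sub>R f x \<partial>lborel) = 0" if E: "E \<in> sets borel" for E
  proof -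
    have "(\<integral>x. indicator E x *\<^sub>R f x \<partial>lborel) = (LINT x:E \<inter> D|lborel. g x)"
      unfolding f_def set_lebesgue_integral_def
      by (rule Bochner_Integration.integral_cong) (auto split: split_indicator)
    also have "\<dots> = 0" using z[of "E \<inter> D"] E D by auto
    finally show ?thesis .
  qed
  have ifE: "integrable lborel (\<lambda>x. indicator E x *\<^sub>R f x)" if "E \<in> sets borel" for E
    using fi that by (intro integrable_mult_indicator) auto
  have "AE x in lborel. Re (f x) = 0"
  proof (rule zero_real)
    show "integrable lborel (\<lambda>x. Re (f x))" using fi by simp
    fix E :: "real set" assume E: "E \<in> sets borel"
    have "(\<integral>x. indicator E x * Re (f x) \<partial>lborel) = (\<integral>x. Re (indicator E x *\<^sub>R f x) \<partial>lborel)" by simp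
    also have "\<dots> = Re (\<integral>x. indicator E x *\<^sub>R f x \<partial>lborel)"
      by (rule Bochner_Integration.integral_Re[OF ifE[OF E]])
    also have "\<dots> = 0" using zf[OF E] by simp
    finally show "(\<integral>x. indicator E x * Re (f x) \<partial>lborel) = 0" .
  qed
  moreover have "AE x in lborel. Im (f x) = 0"
  proof (rule zero_real)
    show "integrable lborel (\<lambda>x. Im (f x))" using fi by simp
    fix E :: "real set" assume E: "E \<in> sets borel"
    have "(\<integral>x. indicator E x * Im (f x) \<partial>lborel) = (\<integral>x. Im (indicator E x *\<^sub>R f x) \<partial>lborel)" by simp
    also have "\<dots> = Im (\<integral>x. indicator E x *\<^sub>R f x \<partial>lborel)"
      by (rule Bochner_Integration.integral_Im[OF ifE[OF E]])
    also have "\<dots> = 0" using zf[OF E] by simp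
    finally show "(\<integral>x. indicator E x * Im (f x) \<partial>lborel) = 0" .
  qed
  ultimately show ?thesis
    by eventually_elim (auto simp: f_def complex_eq_iff)
qed


lemma nu_bound:
  fixes g :: "real \<Rightarrow> complex"
  assumes gi: "set_integrable lborel I g" and I: "I \<in> sets borel" and S: "S \<in> sets borel" "S \<subseteq> I"
  shows "norm (LINT x:S|lborel. g x) \<le> (LINT x:I|lborel. norm (g x))"
proof -
  have iS: "set_integrable lborel S g" by (rule set_integrable_subset[OF gi]) (use S in auto)
  have "norm (LINT x:S|lborel. g x) \<le> (LINT x:S|lborel. norm (g x))"
    by (rule set_integral_norm_bound[OF iS])
  also have "\<dots> \<le> (LINT x:I|lborel. norm (g x))"
    unfolding set_lebesgue_integral_def
    using set_integrable_norm[OF iS] set_integrable_norm[OF gi] S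
    by (intro integral_mono) (auto simp: set_integrable_def split: split_indicator)
  finally show ?thesis .
qed

lemma orbit_zero:
  fixes g :: "real \<Rightarrow> complex" and E :: "nat \<Rightarrow> real set"
  assumes gi: "set_integrable lborel I g" and I: "I \<in> sets borel"
    and Eb: "\<And>n. E n \<in> sets borel" and Es: "\<And>n. E n \<subseteq> I"
    and Ev: "\<And>n. (LINT x:E n|lborel. g x) = (LINT x:E 0|lborel. g x)"
    and disj: "\<And>m n. m \<noteq> n \<Longrightarrow> E m \<inter> E n = {}"
  shows "(LINT x:E 0|lborel. g x) = 0"
proof -
  define v where "v = (LINT x:E 0|lborel. g x)"
  define K where "K = (LINT x:I|lborel. norm (g x))"
  have iE: "set_integrable lborel (E n) g" for n by (rule set_integrable_subset[OF gi]) (use Eb Es in auto)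
  have U: "(\<Union>n<N. E n) \<in> sets borel \<and> (\<Union>n<N. E n) \<subseteq> I \<and> (LINT x:(\<Union>n<N. E n)|lborel. g x) = of_nat N * v" for N
  proof (induction N)
    case 0 then show ?case by (simp add: set_lebesgue_integral_def)
  next
    case (Suc N)
    have eq: "(\<Union>n<Suc N. E n) = (\<Union>n<N. E n) \<union> E N" by (auto simp: lessThan_Suc)
    have d: "(\<Union>n<N. E n) \<inter> E N = {}"
    proof -
      have "E n \<inter> E N = {}" if "n < N" for n using disj[of n N] that by simp
      then show ?thesis by blast
    qed
    have iU: "set_integrable lborel (\<Union>n<N. E n) g" by (rule set_integrable_subset[OF gi]) (use Suc in auto)
    have "(LINT x:(\<Union>n<Suc N. E n)|lborel. g x) = (LINT x:(\<Union>n<N. E n)|lborel. g x) + (LINT x:E N|lborel. g x)"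
      unfolding eq by (rule set_integral_Un[OF d iU iE])
    also have "\<dots> = of_nat (Suc N) * v" using Suc Ev[of N] unfolding v_def by (simp add: algebra_simps)
    finally show ?case using Suc Eb Es eq by auto
  qed
  have bd: "real N * norm v \<le> K" for N
  proof -
    have "norm (of_nat N * v) \<le> K" unfolding K_def using U[of N] nu_bound[OF gi I] by metis
    then show ?thesis by (simp add: norm_mult)
  qed
  show ?thesis
  proof (rule ccontr)
    assume "(LINT x:E 0|lborel. g x) \<noteq> 0"
    then have nv: "norm v > 0" unfolding v_def by simp
    obtain N :: nat where "real N > K / norm v" using reals_Archimedean2 by blast
    then have "real N * norm v > K" using nv by (simp add: field_simps)
    then show False using bd[of N] by simp
  qed
qed




lemma orbit_sets:
  fixes g :: "real \<Rightarrow> complex" and \<psi> :: "real \<Rightarrow> real"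
  assumes mono: "\<And>x y. x < y \<Longrightarrow> \<psi> x < \<psi> y"
    and into: "\<And>x. x \<in> I \<Longrightarrow> \<psi> x \<in> I"
    and invar: "\<And>E. E \<in> sets borel \<Longrightarrow> E \<subseteq> I \<Longrightarrow> \<psi> ` E \<in> sets borel \<and> (LINT x:\<psi> ` E|lborel. g x) = (LINT x:E|lborel. g x)"
    and E: "E \<in> sets borel" "E \<subseteq> I"
  shows "(\<psi> ^^ n) ` E \<in> sets borel \<and> (\<psi> ^^ n) ` E \<subseteq> I \<and> (LINT x:(\<psi> ^^ n) ` E|lborel. g x) = (LINT x:E|lborel. g x)"
proof (induction n)
  case 0 then show ?case using E by simp
next
  case (Suc n)
  have eq: "(\<psi> ^^ Suc n) ` E = \<psi> ` ((\<psi> ^^ n) ` E)" by (simp add: image_comp)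
  show ?case unfolding eq using invar[of "(\<psi> ^^ n) ` E"] Suc into by auto
qed

lemma dyn:
  fixes g :: "real \<Rightarrow> complex" and \<psi> :: "real \<Rightarrow> real" and q r :: real
  assumes p: "periodic1 g" and i: "set_integrable lborel {0..1} g"
    and mono: "\<And>x y. x < y \<Longrightarrow> \<psi> x < \<psi> y"
    and cont: "continuous_on UNIV \<psi>"
    and into: "\<And>x. x \<in> {q<..<r} \<Longrightarrow> \<psi> x \<in> {q<..<r}"
    and nofix: "\<And>x. x \<in> {q<..<r} \<Longrightarrow> \<psi> x \<noteq> x"
    and invar: "\<And>E. E \<in> sets borel \<Longrightarrow> E \<subseteq> {q<..<r} \<Longrightarrow> \<psi> ` E \<in> sets borel \<and> (LINT x:\<psi> ` E|lborel. g x) = (LINT x:E|lborel. g x)"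
  shows "AE x in lborel. x \<in> {q<..<r} \<longrightarrow> g x = 0"
proof -
  define I where "I = {q<..<r}"
  have Ib: "I \<in> sets borel" unfolding I_def by simp
  have gI: "set_integrable lborel I g" unfolding I_def by (rule loc_int[OF p i, of _ q r]) auto
  have monole: "x \<le> y \<Longrightarrow> \<psi> x \<le> \<psi> y" for x y using mono by (cases "x = y") (auto simp: less_eq_real_def)
  define c where "c a n = (\<psi> ^^ n) a" for a n
  have cS: "c a (Suc n) = \<psi> (c a n)" for a n unfolding c_def by simp
  have up: "(LINT x:E|lborel. g x) = 0" if a: "a \<in> I" "a < \<psi> a" and E: "E \<in> sets borel" "E \<subseteq> {a..<\<psi> a}" for a E
  proof -
    have pa: "\<psi> a \<in> I" using into a unfolding I_def by blast
    have Ic: "{a..<\<psi> a} \<subseteq> I" using a pa unfolding I_def by auto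
    have EI: "E \<subseteq> I" using E Ic by auto
    have cinc: "c a n < c a (Suc n)" for n
    proof (induction n)
      case 0 then show ?case using a by (simp add: c_def)
    next
      case (Suc n) then show ?case unfolding cS[of a "Suc n"] cS[of a n] by (rule mono)
    qed
    have cmono: "m \<le> n \<Longrightarrow> c a m \<le> c a n" for m n
      using lift_Suc_mono_le[of "c a", OF less_imp_le[OF cinc]] by blast
    have loc: "(\<psi> ^^ n) ` E \<subseteq> {c a n..<c a (Suc n)}" for n
    proof (induction n)
      case 0 then show ?case using E by (simp add: c_def)
    next
      case (Suc n)
      have eq: "(\<psi> ^^ Suc n) ` E = \<psi> ` ((\<psi> ^^ n) ` E)" by (simp add: image_comp)
      show ?case unfolding eq
      proof
        fix y assume "y \<in> \<psi> ` ((\<psi> ^^ n) ` E)"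
        then obtain x where x: "x \<in> (\<psi> ^^ n) ` E" "y = \<psi> x" by blast
        then have "x \<in> {c a n..<c a (Suc n)}" using Suc by blast
        then show "y \<in> {c a (Suc n)..<c a (Suc (Suc n))}" unfolding x(2) cS using monole mono by auto
      qed
    qed
    have os: "\<And>n. (\<psi> ^^ n) ` E \<in> sets borel \<and> (\<psi> ^^ n) ` E \<subseteq> I \<and> (LINT x:(\<psi> ^^ n) ` E|lborel. g x) = (LINT x:E|lborel. g x)"
      by (rule orbit_sets[OF mono _ _ E(1) EI]) (use into invar in \<open>auto simp: I_def\<close>)
    have disj: "(\<psi> ^^ m) ` E \<inter> (\<psi> ^^ n) ` E = {}" if mn: "m \<noteq> n" for m n
    proof -
      have "{c a m..<c a (Suc m)} \<inter> {c a n..<c a (Suc n)} = {}"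
      proof (cases "m < n")
        case True then have "c a (Suc m) \<le> c a n" using cmono by simp
        then show ?thesis by auto
      next
        case False then have "n < m" using mn by simp
        then have "c a (Suc n) \<le> c a m" using cmono by simp
        then show ?thesis by auto
      qed
      then show ?thesis using loc[of m] loc[of n] by blast
    qed
    have "(LINT x:(\<psi> ^^ 0) ` E|lborel. g x) = 0"
      by (rule orbit_zero[OF gI Ib, of "\<lambda>n. (\<psi> ^^ n) ` E"]) (use os disj in auto)
    then show ?thesis by simp
  qed
  have down: "(LINT x:E|lborel. g x) = 0" if a: "a \<in> I" "\<psi> a < a" and E: "E \<in> sets borel" "E \<subseteq> {\<psi> a..<a}" for a E
  proof -
    have pa: "\<psi> a \<in> I" using into a unfolding I_def by blast
    have Ic: "{\<psi> a..<a} \<subseteq> I" using a pa unfolding I_def by auto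
    have EI: "E \<subseteq> I" using E Ic by auto
    have cdec: "c a (Suc n) < c a n" for n
    proof (induction n)
      case 0 then show ?case using a by (simp add: c_def)
    next
      case (Suc n) then show ?case unfolding cS[of a "Suc n"] cS[of a n] by (rule mono)
    qed
    have cmono: "m \<le> n \<Longrightarrow> c a n \<le> c a m" for m n
      using lift_Suc_antimono_le[of "c a", OF less_imp_le[OF cdec]] by blast
    have loc: "(\<psi> ^^ n) ` E \<subseteq> {c a (Suc n)..<c a n}" for n
    proof (induction n)
      case 0 then show ?case using E by (simp add: c_def)
    next
      case (Suc n)
      have eq: "(\<psi> ^^ Suc n) ` E = \<psi> ` ((\<psi> ^^ n) ` E)" by (simp add: image_comp)
      show ?case unfolding eq
      proof
        fix y assume "y \<in> \<psi> ` ((\<psi> ^^ n) ` E)"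
        then obtain x where x: "x \<in> (\<psi> ^^ n) ` E" "y = \<psi> x" by blast
        then have "x \<in> {c a (Suc n)..<c a n}" using Suc by blast
        then show "y \<in> {c a (Suc (Suc n))..<c a (Suc n)}" unfolding x(2) cS using monole mono by auto
      qed
    qed
    have os: "\<And>n. (\<psi> ^^ n) ` E \<in> sets borel \<and> (\<psi> ^^ n) ` E \<subseteq> I \<and> (LINT x:(\<psi> ^^ n) ` E|lborel. g x) = (LINT x:E|lborel. g x)"
      by (rule orbit_sets[OF mono _ _ E(1) EI]) (use into invar in \<open>auto simp: I_def\<close>)
    have disj: "(\<psi> ^^ m) ` E \<inter> (\<psi> ^^ n) ` E = {}" if mn: "m \<noteq> n" for m n
    proof -
      have "{c a (Suc m)..<c a m} \<inter> {c a (Suc n)..<c a n} = {}"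
      proof (cases "m < n")
        case True then have "c a n \<le> c a (Suc m)" using cmono by simp
        then show ?thesis by auto
      next
        case False then have "n < m" using mn by simp
        then have "c a m \<le> c a (Suc n)" using cmono by simp
        then show ?thesis by auto
      qed
      then show ?thesis using loc[of m] loc[of n] by blast
    qed
    have "(LINT x:(\<psi> ^^ 0) ` E|lborel. g x) = 0"
      by (rule orbit_zero[OF gI Ib, of "\<lambda>n. (\<psi> ^^ n) ` E"]) (use os disj in auto)
    then show ?thesis by simp
  qed
  define D where "D a = (if a < \<psi> a then {a..<\<psi> a} else {\<psi> a..<a})" for a
  have AD: "AE x in lborel. x \<in> D a \<longrightarrow> g x = 0" if a: "a \<in> I" for a
  proof -
    have Db: "D a \<in> sets borel" unfolding D_def by auto
    have pa: "\<psi> a \<in> I" using into a unfolding I_def by blast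
    have DI: "D a \<subseteq> I" using a pa unfolding D_def I_def by auto
    have "set_integrable lborel (D a) g" by (rule set_integrable_subset[OF gI]) (use Db DI in auto)
    moreover have "\<And>E. E \<in> sets borel \<Longrightarrow> E \<subseteq> D a \<Longrightarrow> (LINT x:E|lborel. g x) = 0"
    proof -
      fix E assume E: "E \<in> sets borel" "E \<subseteq> D a"
      show "(LINT x:E|lborel. g x) = 0"
      proof (cases "a < \<psi> a")
        case True then show ?thesis using up[OF a True E(1)] E(2) unfolding D_def by simp
      next
        case False
        then have "\<psi> a < a" using nofix[of a] a unfolding I_def by (simp add: less_le)
        then show ?thesis using down[OF a _ E(1)] E(2) False unfolding D_def by simp
      qed
    qed
    ultimately show ?thesis by (rule zero_set[OF Db])
  qed
  have "AE x in lborel. \<forall>a\<in>\<rat> \<inter> I. x \<in> D a \<longrightarrow> g x = 0"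
    by (rule AE_ball_countable') (use AD countable_rat in auto)
  then show ?thesis
  proof eventually_elim
    case (elim x)
    show ?case
    proof
      assume xI: "x \<in> {q<..<r}"
      have "\<exists>a\<in>\<rat> \<inter> I. x \<in> D a"
      proof (cases "x < \<psi> x")
        case True
        obtain d where d: "d > 0" "\<And>y. dist y x < d \<Longrightarrow> dist (\<psi> y) (\<psi> x) < \<psi> x - x"
          using cont True unfolding continuous_on_iff by (metis UNIV_I diff_gt_0_iff_gt)
        obtain a where a: "a \<in> \<rat>" "max (x - d) q < a" "a < x"
          using Rats_dense_in_real[of "max (x - d) q" x] xI d by auto
        have "dist a x < d" using a by (simp add: dist_real_def)
        then have "\<psi> a > x" using d(2)[of a] by (simp add: dist_real_def abs_less_iff)
        then have "x \<in> D a" "a \<in> I" using a xI unfolding D_def I_def by auto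
        then show ?thesis using a by auto
      next
        case False
        then have F: "\<psi> x < x" using nofix[OF xI] by simp
        obtain d where d: "d > 0" "\<And>y. dist y x < d \<Longrightarrow> dist (\<psi> y) (\<psi> x) < x - \<psi> x"
          using cont F unfolding continuous_on_iff by (metis UNIV_I diff_gt_0_iff_gt)
        obtain a where a: "a \<in> \<rat>" "x < a" "a < min (x + d) r"
          using Rats_dense_in_real[of x "min (x + d) r"] xI d by auto
        have "dist a x < d" using a by (simp add: dist_real_def)
        then have "\<psi> a < x" using d(2)[of a] by (simp add: dist_real_def abs_less_iff)
        then have "x \<in> D a" "a \<in> I" using a xI unfolding D_def I_def by auto
        then show ?thesis using a by auto
      qed
      then show "g x = 0" using elim by blast
    qed
  qed
qed


definition CC :: "real \<Rightarrow> real" where "CC t = cos (2*pi*t)"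
definition SS :: "real \<Rightarrow> real" where "SS t = sin (2*pi*t)"
definition RR :: "real \<Rightarrow> real" where "RR t = inverse (sqrt (1 + 3 * (cos (2*pi*t))\<^sup>2))"

inductive_set SM :: "(real \<Rightarrow> real) set" where
  sm_const: "(\<lambda>t. c) \<in> SM"
| sm_C: "CC \<in> SM"
| sm_S: "SS \<in> SM"
| sm_R: "RR \<in> SM"
| sm_add: "f \<in> SM \<Longrightarrow> g \<in> SM \<Longrightarrow> (\<lambda>t. f t + g t) \<in> SM"
| sm_mult: "f \<in> SM \<Longrightarrow> g \<in> SM \<Longrightarrow> (\<lambda>t. f t * g t) \<in> SM"

lemma RR_pos: "0 < 1 + 3 * (cos (2*pi*t))\<^sup>2" by (simp add: add_pos_nonneg)

lemma RR_deriv3: "((\<lambda>t. inverse (sqrt (1 + 3 * (cos (2*pi*t))\<^sup>2))) has_real_derivative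
   6 * pi * cos (2*pi*t) * sin (2*pi*t) * (inverse (sqrt (1 + 3 * (cos (2*pi*t))\<^sup>2)))^3) (at t)"
proof -
  define h where "h t = 1 + 3 * (cos (2*pi*t))\<^sup>2" for t
  have hp: "h t > 0" for t unfolding h_def by (rule RR_pos)
  have dh: "(h has_real_derivative (- 12 * pi * cos (2*pi*t) * sin (2*pi*t))) (at t)"
    unfolding h_def by (rule derivative_eq_intros refl)+ (simp add: power2_eq_square)
  have ds: "((\<lambda>t. sqrt (h t)) has_real_derivative (inverse (sqrt (h t)) / 2 * (- 12 * pi * cos (2*pi*t) * sin (2*pi*t)))) (at t)"
    by (rule DERIV_chain2[OF DERIV_real_sqrt[OF hp] dh])
  have di: "((\<lambda>t. inverse (sqrt (h t))) has_real_derivative - ((inverse (sqrt (h t)) / 2 * (- 12 * pi * cos (2*pi*t) * sin (2*pi*t))) * inverse ((sqrt (h t)) ^ Suc (Suc 0)))) (at t)"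
    by (rule DERIV_inverse_fun[OF ds]) (use hp[of t] in simp)
  have eq: "- ((inverse (sqrt (h t)) / 2 * (- 12 * pi * cos (2*pi*t) * sin (2*pi*t))) * inverse ((sqrt (h t)) ^ Suc (Suc 0)))
    = 6 * pi * cos (2*pi*t) * sin (2*pi*t) * (inverse (sqrt (h t)))^3"
    using hp[of t] by (simp add: power3_eq_cube power2_eq_square field_simps)
  show ?thesis using di[unfolded eq] by (simp only: h_def)
qed

lemma RR_deriv: "(RR has_real_derivative (6 * pi * CC t * SS t * (RR t * RR t * RR t))) (at t)"
  using RR_deriv3[of t] unfolding RR_def[abs_def] CC_def SS_def by (simp add: power3_eq_cube)

lemma SM_deriv: "f \<in> SM \<Longrightarrow> \<exists>f'\<in>SM. \<forall>t. (f has_real_derivative f' t) (at t)"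
proof (induction rule: SM.induct)
  case (sm_const c) then show ?case by (rule bexI[of _ "\<lambda>t. 0"]) (auto intro: SM.sm_const)
next
  case sm_C
  have d: "(CC has_real_derivative (- 2 * pi) * SS t) (at t)" for t
    unfolding CC_def SS_def by (auto intro!: derivative_eq_intros)
  show ?case by (rule bexI[of _ "\<lambda>t. (- 2 * pi) * SS t"]) (use d in blast, rule SM.sm_mult[OF SM.sm_const SM.sm_S])
next
  case sm_S
  have d: "(SS has_real_derivative (2 * pi) * CC t) (at t)" for t
    unfolding CC_def SS_def by (auto intro!: derivative_eq_intros)
  show ?case by (rule bexI[of _ "\<lambda>t. (2 * pi) * CC t"]) (use d in blast, rule SM.sm_mult[OF SM.sm_const SM.sm_C])
next
  case sm_R
  show ?case
    by (rule bexI[of _ "\<lambda>t. 6 * pi * CC t * SS t * (RR t * RR t * RR t)"])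
       (use RR_deriv in blast, rule SM.sm_mult[OF SM.sm_mult[OF SM.sm_mult[OF SM.sm_const SM.sm_C] SM.sm_S] SM.sm_mult[OF SM.sm_mult[OF SM.sm_R SM.sm_R] SM.sm_R]])
next
  case (sm_add f g)
  then obtain f' g' where d: "f' \<in> SM" "g' \<in> SM" "\<forall>t. (f has_real_derivative f' t) (at t)" "\<forall>t. (g has_real_derivative g' t) (at t)"
    by blast
  show ?case by (rule bexI[of _ "\<lambda>t. f' t + g' t"]) (use d in \<open>blast intro: derivative_intros\<close>, rule SM.sm_add[OF d(1,2)])
next
  case (sm_mult f g)
  then obtain f' g' where d: "f' \<in> SM" "g' \<in> SM" "\<forall>t. (f has_real_derivative f' t) (at t)" "\<forall>t. (g has_real_derivative g' t) (at t)"
    by blast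
  have dm: "\<forall>t. ((\<lambda>t. f t * g t) has_real_derivative f t * g' t + f' t * g t) (at t)"
    using d(3,4) by (auto intro!: derivative_eq_intros)
  have m: "(\<lambda>t. f t * g' t + f' t * g t) \<in> SM"
    by (rule SM.sm_add[OF SM.sm_mult[OF \<open>f \<in> SM\<close> d(2)] SM.sm_mult[OF d(1) \<open>g \<in> SM\<close>]])
  show ?case by (rule bexI[OF _ m]) (use dm in simp)
qed

definition dd :: "(real \<Rightarrow> real) \<Rightarrow> (real \<Rightarrow> real)" where
  "dd f = (SOME f'. f' \<in> SM \<and> (\<forall>t. (f has_real_derivative f' t) (at t)))"

lemma dd: "f \<in> SM \<Longrightarrow> dd f \<in> SM \<and> (\<forall>t. (f has_real_derivative dd f t) (at t))"
proof -
  assume "f \<in> SM"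
  then have "\<exists>f'. f' \<in> SM \<and> (\<forall>t. (f has_real_derivative f' t) (at t))" using SM_deriv by blast
  then show ?thesis unfolding dd_def by (rule someI_ex)
qed

lemma dd_iter: "f \<in> SM \<Longrightarrow> (dd ^^ n) f \<in> SM"
  by (induction n) (auto dest: dd)

lemma u1_SM: "u1 \<in> SM"
proof -
  have e: "u1 = (\<lambda>t. CC t + (\<lambda>t. -1) t * SS t)" unfolding u1_def CC_def SS_def by auto
  show ?thesis unfolding e by (rule SM.sm_add[OF SM.sm_C SM.sm_mult[OF SM.sm_const SM.sm_S]])
qed

lemma u2_SM: "u2 \<in> SM"
proof -
  have e: "u2 = (\<lambda>t. (\<lambda>t. (\<lambda>t. 2) t * CC t + SS t) t * RR t)" unfolding u2_def CC_def SS_def RR_def by (auto simp: divide_inverse)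
  show ?thesis unfolding e by (rule SM.sm_mult[OF SM.sm_add[OF SM.sm_mult[OF SM.sm_const SM.sm_C] SM.sm_S] SM.sm_R])
qed

definition gam :: "real \<Rightarrow> real \<times> real" where "gam t = (u1 t, u2 t)"

lemma gam_smooth: "smooth_curve gam"
  unfolding smooth_curve_def
proof (intro exI[of _ "\<lambda>n t. ((dd ^^ n) u1 t, (dd ^^ n) u2 t)"] conjI allI)
  show "(\<lambda>t. ((dd ^^ 0) u1 t, (dd ^^ 0) u2 t)) = gam" by (simp add: gam_def fun_eq_iff)
  fix n t
  have a: "((dd ^^ n) u1 has_real_derivative (dd ^^ Suc n) u1 t) (at t)"
    using dd[OF dd_iter[OF u1_SM, of n]] by simp
  have b: "((dd ^^ n) u2 has_real_derivative (dd ^^ Suc n) u2 t) (at t)"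
    using dd[OF dd_iter[OF u2_SM, of n]] by simp
  show "((\<lambda>t. ((dd ^^ n) u1 t, (dd ^^ n) u2 t)) has_vector_derivative ((dd ^^ Suc n) u1 t, (dd ^^ Suc n) u2 t)) (at t)"
    using a b unfolding has_real_derivative_iff_has_vector_derivative by (intro has_vector_derivative_Pair)
qed


lemma RR_pos': "RR t > 0" unfolding RR_def using RR_pos[of t] by simp

lemma RR_sq: "(RR t)\<^sup>2 * (1 + 3 * (CC t)\<^sup>2) = 1"
  unfolding RR_def CC_def using RR_pos[of t] by (simp add: power_inverse)

definition du1 :: "real \<Rightarrow> real" where "du1 t = - 2 * pi * SS t - 2 * pi * CC t"
definition du2 :: "real \<Rightarrow> real" where
  "du2 t = (- 4 * pi * SS t + 2 * pi * CC t) * RR t + (2 * CC t + SS t) * (6 * pi * CC t * SS t * (RR t * RR t * RR t))"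

lemma u1_deriv: "(u1 has_real_derivative du1 t) (at t)"
  unfolding u1_def du1_def CC_def SS_def by (auto intro!: derivative_eq_intros)

lemma u2_eq: "u2 = (\<lambda>t. (2 * CC t + SS t) * RR t)"
  unfolding u2_def CC_def SS_def RR_def by (auto simp: divide_inverse)

lemma u2_deriv: "(u2 has_real_derivative du2 t) (at t)"
proof -
  have c: "(CC has_real_derivative (- 2 * pi) * SS t) (at t)"
    unfolding CC_def SS_def by (auto intro!: derivative_eq_intros)
  have s: "(SS has_real_derivative (2 * pi) * CC t) (at t)"
    unfolding CC_def SS_def by (auto intro!: derivative_eq_intros)
  have "((\<lambda>t. (2 * CC t + SS t) * RR t) has_real_derivative du2 t) (at t)"
    unfolding du2_def by (rule derivative_eq_intros c s RR_deriv refl)+ (simp add: algebra_simps)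
  then show ?thesis unfolding u2_eq .
qed

lemma gam_vderiv: "(gam has_vector_derivative (du1 t, du2 t)) (at t)"
  unfolding gam_def[abs_def]
  using u1_deriv[of t] u2_deriv[of t] unfolding has_real_derivative_iff_has_vector_derivative
  by (intro has_vector_derivative_Pair)

lemma gam_vd: "vector_derivative gam (at t) = (du1 t, du2 t)"
  by (rule vector_derivative_at[OF gam_vderiv])

lemma gam_regular: "vector_derivative gam (at t) \<noteq> 0"
proof
  assume "vector_derivative gam (at t) = 0"
  then have d1: "du1 t = 0" and d2: "du2 t = 0" unfolding gam_vd by (simp_all add: zero_prod_def)
  define C where "C = CC t"
  define S where "S = SS t"
  define R where "R = RR t"
  have cs: "C\<^sup>2 + S\<^sup>2 = 1" unfolding C_def S_def CC_def SS_def by simp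
  have Rp: "R > 0" unfolding R_def by (rule RR_pos')
  have Rs: "R\<^sup>2 * (1 + 3 * C\<^sup>2) = 1" unfolding R_def C_def by (rule RR_sq)
  have "2 * pi * (S + C) = 0" using d1 unfolding du1_def C_def[symmetric] S_def[symmetric] by (simp add: algebra_simps)
  then have SC: "S = - C" by (simp add: add_eq_0_iff2)
  have "(- 4 * pi * S + 2 * pi * C) * R + (2 * C + S) * (6 * pi * C * S * (R * R * R)) = 0"
    using d2 unfolding du2_def C_def S_def R_def .
  then have "R * (6 * pi * C * (1 - C\<^sup>2 * R\<^sup>2)) = 0" unfolding SC by (simp add: algebra_simps power2_eq_square)
  then have "C = 0 \<or> C\<^sup>2 * R\<^sup>2 = 1" using Rp by simp
  then show False
  proof
    assume "C = 0" then show False using cs SC by simp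
  next
    assume h: "C\<^sup>2 * R\<^sup>2 = 1"
    have "R\<^sup>2 + 3 * (C\<^sup>2 * R\<^sup>2) = 1" using Rs by (simp add: algebra_simps)
    then have "R\<^sup>2 = -2" using h by simp
    then show False using zero_le_power2[of R] by linarith
  qed
qed

lemma gam_periodic: "gam (t + 1) = gam t"
  unfolding gam_def u1_def u2_def by (simp add: distrib_left)

lemma s1_inv: "s1 (s1 t) = t" unfolding s1_def by simp
lemma s1_int: "s1 (t + of_int n) = s1 t - of_int n" unfolding s1_def by simp

lemma gam_inj: "gam s = gam t \<Longrightarrow> s - t \<in> \<int>"
proof -
  assume e: "gam s = gam t"
  then have e1: "u1 s = u1 t" and e2: "u2 s = u2 t" unfolding gam_def by auto
  show ?thesis
  proof (rule ccontr)
    assume nz: "s - t \<notin> \<int>"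
    have nt: "\<not> (\<exists>n::int. s = t + of_int n)"
    proof
      assume "\<exists>n::int. s = t + of_int n"
      then obtain n :: int where "s = t + of_int n" by blast
      then have "s - t = of_int n" by simp
      then show False using nz by simp
    qed
    obtain n :: int where n: "s = s1 t + of_int n" using e1 nt unfolding u1_level by blast
    obtain m :: int where m: "s = s2 t + of_int m" using e2 nt unfolding u2_level by blast
    define y where "y = s1 t"
    have ty: "t = s1 y" unfolding y_def by (simp add: s1_inv)
    have "FF y = s2 t" unfolding FF_def ty[symmetric] ..
    also have "s2 t = s - of_int m" using m by simp
    finally have "FF y - y = (s - of_int m) - (s - of_int n)" using n unfolding y_def by simp
    then have "FF y - y = of_int (n - m)" by simp
    then show False using FF_minus_not_int[of y] by (metis Ints_of_int)
  qed
qed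

lemma gam_closed: "smooth_closed_curve gam"
  unfolding smooth_closed_curve_def
  using gam_smooth gam_periodic gam_inj gam_regular by blast

lemma level_frac:
  fixes u \<sigma> :: "real \<Rightarrow> real"
  assumes lev: "\<And>s t. u s = u t \<longleftrightarrow> (\<exists>n::int. s = t + of_int n) \<or> (\<exists>n::int. s = \<sigma> t + of_int n)"
  shows "{t \<in> {0..<1}. u t = u s} = {frac s, frac (\<sigma> s)}"
proof
  show "{t \<in> {0..<1}. u t = u s} \<subseteq> {frac s, frac (\<sigma> s)}"
  proof
    fix t assume t: "t \<in> {t \<in> {0..<1}. u t = u s}"
    then consider (A) n :: int where "t = s + of_int n" | (B) n :: int where "t = \<sigma> s + of_int n"
      using lev by blast
    then show "t \<in> {frac s, frac (\<sigma> s)}"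
    proof cases
      case A then have "frac s = t" using t unfolding frac_unique_iff by simp
      then show ?thesis by simp
    next
      case B then have "frac (\<sigma> s) = t" using t unfolding frac_unique_iff by simp
      then show ?thesis by simp
    qed
  qed
  show "{frac s, frac (\<sigma> s)} \<subseteq> {t \<in> {0..<1}. u t = u s}"
  proof -
    have "u (frac s) = u s" unfolding lev frac_def by (intro disjI1 exI[of _ "- floor s"]) simp
    moreover have "u (frac (\<sigma> s)) = u s" unfolding lev frac_def by (intro disjI2 exI[of _ "- floor (\<sigma> s)"]) simp
    ultimately show ?thesis by (auto simp: frac_lt_1)
  qed
qed

lemma dir0: "dir 0 = (1, 0)" unfolding dir_def by simp
lemma dirpi2: "dir (pi/2) = (0, 1)" unfolding dir_def by simp

lemma level1: "level_set gam 0 s = {frac s, frac (s1 s)}"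
proof -
  have e: "level_set gam 0 s = {t \<in> {0..<1}. u1 t = u1 s}" unfolding level_set_def dir0 gam_def by simp
  show ?thesis unfolding e by (rule level_frac[OF u1_level])
qed

lemma level2: "level_set gam (pi/2) s = {frac s, frac (s2 s)}"
proof -
  have e: "level_set gam (pi/2) s = {t \<in> {0..<1}. u2 t = u2 s}" unfolding level_set_def dirpi2 gam_def by simp
  show ?thesis unfolding e by (rule level_frac[OF u2_level])
qed

lemma Phi_pair:
  assumes L: "level_set gam th s = {frac s, frac (\<sigma> s)}"
  shows "Phi gam th s = frac (\<sigma> s)"
proof (cases "frac (\<sigma> s) = frac s")
  case True
  then have "\<not> (\<exists>t\<in>level_set gam th s. t \<noteq> frac s)" unfolding L by auto
  then show ?thesis unfolding Phi_def using True by simp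
next
  case False
  then have ex: "\<exists>t\<in>level_set gam th s. t \<noteq> frac s" unfolding L by auto
  have "(THE t. t \<in> level_set gam th s \<and> t \<noteq> frac s) = frac (\<sigma> s)"
  proof (rule the_equality)
    show "frac (\<sigma> s) \<in> level_set gam th s \<and> frac (\<sigma> s) \<noteq> frac s" using False unfolding L by simp
    fix t assume "t \<in> level_set gam th s \<and> t \<noteq> frac s"
    then show "t = frac (\<sigma> s)" unfolding L by blast
  qed
  then show ?thesis unfolding Phi_def using ex by simp
qed

lemma Phi1: "Phi gam 0 s = frac (s1 s)" by (rule Phi_pair[OF level1])
lemma Phi2: "Phi gam (pi/2) s = frac (s2 s)" by (rule Phi_pair[OF level2])

lemma wd_pair: "level_set gam th s = {frac s, frac (\<sigma> s)} \<Longrightarrow> finite (level_set gam th s) \<and> card (level_set gam th s) \<le> 2"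
  by (simp add: card_insert_le_m1)

lemma wd1: "Phi_well_defined gam 0"
  unfolding Phi_well_defined_def by (intro allI wd_pair[OF level1])
lemma wd2: "Phi_well_defined gam (pi/2)"
  unfolding Phi_well_defined_def by (intro allI wd_pair[OF level2])

lemma s2_frac: "frac (s2 (frac y)) = frac (s2 y)"
proof -
  have "s2 (frac y) = s2 y + of_int (floor y)"
    unfolding frac_def using s2_int[of y "- floor y"] by simp
  then show ?thesis by simp
qed

lemma Psi_eq: "(Phi gam (pi/2) \<circ> Phi gam 0) x = frac (FF x)"
  unfolding comp_def Phi1 Phi2 FF_def by (simp add: s2_frac)

lemma lift_FF: "is_lift FF (Phi gam (pi/2) \<circ> Phi gam 0)"
  unfolding is_lift_def using FF_cont FF_strict_mono FF_1 Psi_eq by simp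

lemma ophomeo: "orientation_preserving_circle_homeo (Phi gam (pi/2) \<circ> Phi gam 0)"
  unfolding orientation_preserving_circle_homeo_def using lift_FF by blast


lemma lift_const:
  assumes F: "is_lift F \<Psi>" and G: "is_lift G \<Psi>"
  shows "\<exists>k::int. \<forall>x. F x = G x + of_int k"
proof -
  define h where "h x = F x - G x" for x
  have hc: "continuous_on UNIV h" unfolding h_def using F G unfolding is_lift_def
    by (intro continuous_intros) auto
  have hi: "h x \<in> \<int>" for x
  proof -
    have "frac (F x) = frac (G x)" using F G unfolding is_lift_def by simp
    then obtain n where "F x = G x + of_int n" by (rule frac_eqE)
    then show ?thesis unfolding h_def by simp
  qed
  have "h constant_on UNIV"
  proof (rule continuous_discrete_range_constant[OF connected_UNIV hc])
    fix x :: real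
    show "\<exists>e>0. \<forall>y. y \<in> UNIV \<and> h y \<noteq> h x \<longrightarrow> e \<le> norm (h y - h x)"
    proof (intro exI[of _ 1] conjI allI impI)
      fix y assume "y \<in> UNIV \<and> h y \<noteq> h x"
      moreover obtain a b where "h x = of_int a" "h y = of_int b" using hi[of x] hi[of y] by (auto elim!: Ints_cases)
      ultimately show "1 \<le> norm (h y - h x)" by (simp flip: of_int_diff)
    qed simp
  qed
  then obtain c where c: "\<And>x. h x = c" unfolding constant_on_def by blast
  obtain k where "c = of_int k" using hi[of 0] c by (auto elim!: Ints_cases)
  then show ?thesis using c unfolding h_def by (intro exI[of _ k]) (auto simp: algebra_simps)
qed

lemma FF_half: "FF (real n / 2) = real n / 2 + 1/2"
  using FF_quarter[of "2 * int n"] by simp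

lemma rho_rat: "rho gam 0 (pi/2) \<in> \<rat>"
proof -
  define \<Psi> where "\<Psi> = Phi gam (pi/2) \<circ> Phi gam 0"
  define F0 where "F0 = (SOME F. is_lift F \<Psi>)"
  have F0: "is_lift F0 \<Psi>" unfolding F0_def \<Psi>_def by (rule someI[of _ FF]) (rule lift_FF)
  obtain k :: int where k: "\<And>x. F0 x = FF x + of_int k" using lift_const[OF F0 lift_FF[folded \<Psi>_def]] by blast
  have it: "(F0 ^^ n) 0 = real n / 2 + real n * of_int k" for n
  proof (induction n)
    case 0 then show ?case by simp
  next
    case (Suc n)
    have "(F0 ^^ Suc n) 0 = F0 (real n / 2 + real n * of_int k)" using Suc.IH by simp
    also have "\<dots> = FF (real n / 2 + of_int (int n * k)) + of_int k" unfolding k by simp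
    also have "\<dots> = FF (real n / 2) + of_int (int n * k) + of_int k" by (rule arg_cong[OF FF_int, where f = "\<lambda>x. x + of_int k"])
    also have "\<dots> = real (Suc n) / 2 + real (Suc n) * of_int k" unfolding FF_half by (simp add: algebra_simps)
    finally show ?case .
  qed
  have ev: "\<forall>\<^sub>F n in sequentially. ((F0 ^^ n) 0 - 0) / real n = 1/2 + of_int k"
    using eventually_ge_at_top[of "1::nat"] by eventually_elim (simp add: it field_simps)
  have "(\<lambda>n. ((F0 ^^ n) 0 - 0) / real n) \<longlonglongrightarrow> 1/2 + of_int k"
    by (rule tendsto_eventually[OF ev])
  then have "lim (\<lambda>n. ((F0 ^^ n) 0 - 0) / real n) = 1/2 + of_int k" by (rule limI)
  then have eq: "rho gam 0 (pi/2) = frac (1/2 + of_int k)"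
    unfolding rho_def rotation_number_def F0_def[symmetric] \<Psi>_def[symmetric] by simp
  have r: "1/2 + of_int k \<in> (\<rat>::real set)" by (intro Rats_add) auto
  show ?thesis unfolding eq using r frac_in_Rats_iff by blast
qed


lemma CC_per: "CC (t + 1) = CC t" unfolding CC_def by (simp add: distrib_left)
lemma SS_per: "SS (t + 1) = SS t" unfolding SS_def by (simp add: distrib_left)
lemma RR_per: "RR (t + 1) = RR t" unfolding RR_def by (simp add: distrib_left)

lemma vd_per: "vector_derivative gam (at (t + 1)) = vector_derivative gam (at t)"
  unfolding gam_vd du1_def du2_def CC_per SS_per RR_per ..

lemma fourier_to_P0:
  fixes g :: "real \<Rightarrow> complex" and u :: "real \<Rightarrow> real"
  assumes i: "set_integrable lborel {0..1} g"
    and um: "u \<in> borel_measurable borel"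
    and z: "\<And>\<tau>. (LINT t:{0..1}|lborel. exp (- (\<i> * complex_of_real (\<tau> * u t))) * g t) = 0"
    and B: "B \<in> sets borel"
  shows "(LINT x:{0..1} \<inter> u -` B|lborel. g x) = 0"
proof -
  define G where "G t = indicator {0..1} t *\<^sub>R g t" for t
  have Gi: "integrable lborel G" using i unfolding G_def set_integrable_def .
  have zz: "(\<integral>t. iexp (\<sigma> * u t) * G t \<partial>lborel) = 0" for \<sigma>
  proof -
    have "(\<integral>t. iexp (\<sigma> * u t) * G t \<partial>lborel) = (LINT t:{0..1}|lborel. exp (- (\<i> * complex_of_real ((-\<sigma>) * u t))) * g t)"
      unfolding set_lebesgue_integral_def G_def
      by (rule Bochner_Integration.integral_cong) (auto split: split_indicator)
    also have "\<dots> = 0" by (rule z)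
    finally show ?thesis .
  qed
  have "(\<integral>t. indicator (u -` B) t *\<^sub>R G t \<partial>lborel) = 0"
    by (rule fourier_unique_complex[OF um Gi zz B])
  moreover have "(\<integral>t. indicator (u -` B) t *\<^sub>R G t \<partial>lborel) = (LINT x:{0..1} \<inter> u -` B|lborel. g x)"
    unfolding set_lebesgue_integral_def G_def
    by (rule Bochner_Integration.integral_cong) (auto split: split_indicator)
  ultimately show ?thesis by simp
qed

lemma u1_cont: "continuous_on UNIV u1" unfolding u1_def by (intro continuous_intros)
lemma u2_cont: "continuous_on UNIV u2"
  unfolding u2_def using RR_pos by (intro continuous_intros) (auto simp: less_imp_neq[symmetric])

lemma s1_cont: "continuous_on UNIV s1" unfolding s1_def by (intro continuous_intros)

definition a2 :: real where "a2 = Ak 2 (pi/4) / (2*pi)"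

lemma Ak2inv: "Ak (1/2) (Ak 2 (pi/4)) = pi/4" by (rule Ak_inv') simp

lemma s2_a2: "s2 a2 = a2"
proof -
  have e1: "2*pi*a2 = Ak 2 (pi/4)" unfolding a2_def by simp
  have e3: "pi/2 - pi/4 = pi/4" by simp
  have "s2 a2 = Ak 2 (pi/2 - Ak (1/2) (2*pi*a2)) / (2*pi)" by (simp only: s2_def)
  also have "\<dots> = Ak 2 (pi/4) / (2*pi)" by (simp only: e1 Ak2inv e3)
  also have "\<dots> = a2" by (simp add: a2_def)
  finally show ?thesis .
qed

lemma s2_a2b: "s2 (a2 + 1/2) = a2 - 1/2"
proof -
  have e1: "2 * pi * (a2 + 1/2) = Ak 2 (pi/4) + pi" unfolding a2_def by (simp add: field_simps)
  have e2: "Ak (1/2) (Ak 2 (pi/4) + pi) = pi/4 + pi" by (simp only: Ak_pi Ak2inv)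
  have e3: "pi/2 - (pi/4 + pi) = pi/4 - pi" by simp
  have "s2 (a2 + 1/2) = Ak 2 (pi/2 - Ak (1/2) (2 * pi * (a2 + 1/2))) / (2*pi)" by (simp only: s2_def)
  also have "\<dots> = Ak 2 (pi/4 - pi) / (2*pi)" by (simp only: e1 e2 e3)
  also have "\<dots> = (Ak 2 (pi/4) - pi) / (2*pi)" by (simp only: Ak_mpi)
  also have "\<dots> = a2 - 1/2" by (simp add: a2_def field_simps)
  finally show ?thesis .
qed

context
  fixes f :: "real \<times> real \<Rightarrow> complex"
  assumes A: "AC_density gam f"
    and Z: "\<forall>p\<in>line 0 \<union> line (pi/2). fourier_AC gam f p = 0"
begin

definition gg :: "real \<Rightarrow> complex" where
  "gg t = f (gam t) * complex_of_real (norm (vector_derivative gam (at t)))"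

lemma gg_int: "set_integrable lborel {0..1} gg"
  using A unfolding AC_density_def gg_def .

lemma gg_per: "periodic1 gg"
  unfolding periodic1_def gg_def gam_periodic vd_per by simp

lemma P0_1: "B \<in> sets borel \<Longrightarrow> (LINT x:{0..1} \<inter> u1 -` B|lborel. gg x) = 0"
proof (rule fourier_to_P0[OF gg_int])
  show "u1 \<in> borel_measurable borel" by (rule borel_measurable_continuous_onI[OF u1_cont])
  fix \<tau> :: real
  have "\<tau> *\<^sub>R dir 0 \<in> line 0" unfolding line_def by blast
  then have "fourier_AC gam f (\<tau> *\<^sub>R dir 0) = 0" using Z by blast
  then show "(LINT t:{0..1}|lborel. exp (- (\<i> * complex_of_real (\<tau> * u1 t))) * gg t) = 0"
    unfolding fourier_AC_def dir0 gg_def gam_def by (simp add: mult.assoc)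
qed

lemma P0_2: "B \<in> sets borel \<Longrightarrow> (LINT x:{0..1} \<inter> u2 -` B|lborel. gg x) = 0"
proof (rule fourier_to_P0[OF gg_int])
  show "u2 \<in> borel_measurable borel" by (rule borel_measurable_continuous_onI[OF u2_cont])
  fix \<tau> :: real
  have "\<tau> *\<^sub>R dir (pi/2) \<in> line (pi/2)" unfolding line_def by blast
  then have "fourier_AC gam f (\<tau> *\<^sub>R dir (pi/2)) = 0" using Z by blast
  then show "(LINT t:{0..1}|lborel. exp (- (\<i> * complex_of_real (\<tau> * u2 t))) * gg t) = 0"
    unfolding fourier_AC_def dirpi2 gg_def gam_def by (simp add: mult.assoc)
qed

lemma sig1: "sigctx gg u1 s1 (-1/8)"
proof
  show "periodic1 gg" by (rule gg_per)
  show "set_integrable lborel {0..1} gg" by (rule gg_int)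
  show "continuous_on UNIV u1" by (rule u1_cont)
  show "continuous_on UNIV s1" by (rule s1_cont)
  show "s1 (s1 x) = x" for x by (rule s1_inv)
  show "x < y \<Longrightarrow> s1 y < s1 x" for x y by (rule s1_decr)
  show "s1 (-1/8) = -1/8" unfolding s1_def by simp
  show "s1 (-1/8 + 1/2) = -1/8 - 1/2" unfolding s1_def by simp
  show "s1 (x + 1) = s1 x - 1" for x unfolding s1_def by simp
  show "u1 s = u1 t \<longleftrightarrow> (\<exists>n::int. s = t + of_int n) \<or> (\<exists>n::int. s = s1 t + of_int n)" for s t
    by (rule u1_level)
  show "B \<in> sets borel \<Longrightarrow> (LINT x:{0..1} \<inter> u1 -` B|lborel. gg x) = 0" for B by (rule P0_1)
qed

lemma sig2: "sigctx gg u2 s2 a2"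
proof
  show "periodic1 gg" by (rule gg_per)
  show "set_integrable lborel {0..1} gg" by (rule gg_int)
  show "continuous_on UNIV u2" by (rule u2_cont)
  show "continuous_on UNIV s2" by (rule s2_cont)
  show "s2 (s2 x) = x" for x by (rule s2_inv)
  show "x < y \<Longrightarrow> s2 y < s2 x" for x y by (rule s2_decr)
  show "s2 a2 = a2" by (rule s2_a2)
  show "s2 (a2 + 1/2) = a2 - 1/2" by (rule s2_a2b)
  show "s2 (x + 1) = s2 x - 1" for x by (rule s2_1)
  show "u2 s = u2 t \<longleftrightarrow> (\<exists>n::int. s = t + of_int n) \<or> (\<exists>n::int. s = s2 t + of_int n)" for s t
    by (rule u2_level)
  show "B \<in> sets borel \<Longrightarrow> (LINT x:{0..1} \<inter> u2 -` B|lborel. gg x) = 0" for B by (rule P0_2)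
qed

lemma step:
  fixes j :: int
  assumes E: "E \<in> sets borel" "E \<subseteq> {of_int j / 4 .. of_int j / 4 + 1/4}"
  shows "s2 -` (s1 -` E) \<in> sets borel \<and> s2 -` (s1 -` E) \<subseteq> {of_int (j+2) / 4 .. of_int (j+2) / 4 + 1/4}
     \<and> (LINT x:s2 -` (s1 -` E)|lborel. gg x) = (LINT x:E|lborel. gg x)"
proof -
  define Y where "Y = s1 -` E"
  have Yb: "Y \<in> sets borel" unfolding Y_def by (rule sigctx.pre_borel[OF sig1 E(1)])
  have nY: "(LINT x:Y|lborel. gg x) = - (LINT x:E|lborel. gg x)"
    unfolding Y_def by (rule sigctx.sig_gen[OF sig1 E(1), of "of_int j / 4"]) (use E(2) in auto)
  have Ys: "Y \<subseteq> {- of_int j / 4 - 1/2 .. - of_int j / 4 - 1/2 + 1/2}"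
    using sigctx.pre_sub[OF sig1 E(2)] unfolding Y_def s1_def by auto
  have nX: "(LINT x:s2 -` Y|lborel. gg x) = - (LINT x:Y|lborel. gg x)"
    by (rule sigctx.sig_gen[OF sig2 Yb Ys])
  have Xb: "s2 -` Y \<in> sets borel" by (rule sigctx.pre_borel[OF sig2 Yb])
  have Xs: "s2 -` Y \<subseteq> {of_int (j+2) / 4 .. of_int (j+2) / 4 + 1/4}"
  proof
    fix x assume "x \<in> s2 -` Y"
    then have z: "s1 (s2 x) \<in> E" unfolding Y_def by simp
    have xz: "x = FF (s1 (s2 x))" unfolding FF_def s1_inv s2_inv ..
    have "FF (of_int j / 4) \<le> x" using FF_mono_le[of "of_int j / 4" "s1 (s2 x)"] z E(2) xz by auto
    moreover have "x \<le> FF (of_int (j + 1) / 4)" using FF_mono_le[of "s1 (s2 x)" "of_int (j+1) / 4"] z E(2) xz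
      by (auto simp: add_divide_distrib)
    ultimately show "x \<in> {of_int (j+2) / 4 .. of_int (j+2) / 4 + 1/4}"
      unfolding FF_quarter by (simp add: field_simps)
  qed
  show ?thesis using Xb Xs nX nY unfolding Y_def by simp
qed

lemma psi_image: "psi ` E = (\<lambda>y. y + 1) -` (s2 -` (s1 -` (s2 -` (s1 -` E))))"
proof
  show "psi ` E \<subseteq> (\<lambda>y. y + 1) -` (s2 -` (s1 -` (s2 -` (s1 -` E))))"
    unfolding psi_def FF_def by (auto simp: s1_inv s2_inv)
  show "(\<lambda>y. y + 1) -` (s2 -` (s1 -` (s2 -` (s1 -` E)))) \<subseteq> psi ` E"
  proof
    fix y assume "y \<in> (\<lambda>y. y + 1) -` (s2 -` (s1 -` (s2 -` (s1 -` E))))"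
    then have x: "s1 (s2 (s1 (s2 (y + 1)))) \<in> E" by simp
    have "y = psi (s1 (s2 (s1 (s2 (y + 1)))))" unfolding psi_def FF_def by (simp add: s1_inv s2_inv)
    then show "y \<in> psi ` E" using x by blast
  qed
qed

lemma psi_invar:
  fixes j :: int
  assumes E: "E \<in> sets borel" "E \<subseteq> {of_int j / 4 <..< of_int j / 4 + 1/4}"
  shows "psi ` E \<in> sets borel \<and> (LINT x:psi ` E|lborel. gg x) = (LINT x:E|lborel. gg x)"
proof -
  have E2: "E \<subseteq> {of_int j / 4 .. of_int j / 4 + 1/4}" using E(2) by auto
  define X where "X = s2 -` (s1 -` E)"
  have X: "X \<in> sets borel" "X \<subseteq> {of_int (j+2) / 4 .. of_int (j+2) / 4 + 1/4}" "(LINT x:X|lborel. gg x) = (LINT x:E|lborel. gg x)"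
    using step[OF E(1) E2] unfolding X_def by auto
  define W where "W = s2 -` (s1 -` X)"
  have W: "W \<in> sets borel" "(LINT x:W|lborel. gg x) = (LINT x:X|lborel. gg x)"
    using step[OF X(1) X(2)] unfolding W_def by auto
  have pe: "psi ` E = (\<lambda>y. y + of_int 1) -` W" unfolding psi_image W_def X_def by simp
  have "(\<lambda>y::real. y + of_int 1) \<in> borel_measurable borel" by measurable
  then have "psi ` E \<in> sets borel" unfolding pe using measurable_sets_borel[OF _ W(1)] by blast
  moreover have "(LINT x:psi ` E|lborel. gg x) = (LINT x:W|lborel. gg x)"
    unfolding pe by (rule shift_integral(1)[OF gg_per])
  ultimately show ?thesis using W X by simp
qed

lemma psi_mono: "x < y \<Longrightarrow> psi x < psi y" unfolding psi_def using FF_mono by simp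

lemma psi_cont: "continuous_on UNIV psi"
  unfolding psi_def by (intro continuous_intros continuous_on_compose2[OF FF_cont]) auto

lemma quarter_AE:
  fixes j :: int
  shows "AE x in lborel. x \<in> {of_int j / 4 <..< of_int j / 4 + 1/4} \<longrightarrow> gg x = 0"
proof (rule dyn[OF gg_per gg_int psi_mono psi_cont])
  fix x :: real assume x: "x \<in> {of_int j / 4 <..< of_int j / 4 + 1/4}"
  have a: "FF (of_int j / 4) < FF x" "FF x < FF (of_int (j+1) / 4)" using x FF_mono by (auto simp: add_divide_distrib)
  then have b: "of_int (j+2) / 4 < FF x" "FF x < of_int (j+2) / 4 + 1/4" unfolding FF_quarter by (simp_all add: field_simps)
  have "FF (of_int (j+2) / 4) < FF (FF x)" "FF (FF x) < FF (of_int (j+3) / 4)"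
    using b FF_mono by (auto simp: add_divide_distrib)
  then show "psi x \<in> {of_int j / 4 <..< of_int j / 4 + 1/4}" unfolding psi_def FF_quarter by (simp add: field_simps)
  show "psi x \<noteq> x"
  proof
    assume "psi x = x"
    then have "4 * x \<in> \<int>" by (rule psi_fix)
    then obtain m :: int where m: "4 * x = of_int m" by (auto elim!: Ints_cases)
    have "of_int j < (of_int m :: real)" "(of_int m :: real) < of_int j + 1" using x m by auto
    then show False by simp
  qed
next
  fix E :: "real set" assume "E \<in> sets borel" "E \<subseteq> {of_int j / 4 <..< of_int j / 4 + 1/4}"
  then show "psi ` E \<in> sets borel \<and> (LINT x:psi ` E|lborel. gg x) = (LINT x:E|lborel. gg x)"
    by (rule psi_invar)
qed

lemma gg_zero: "AE t in lborel. t \<in> {0..1} \<longrightarrow> gg t = 0"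
proof -
  have q0: "AE x in lborel. x \<in> {0 <..< 1/4} \<longrightarrow> gg x = 0" using quarter_AE[of 0] by simp
  have q1: "AE x in lborel. x \<in> {1/4 <..< 1/2} \<longrightarrow> gg x = 0" using quarter_AE[of 1] by simp
  have q2: "AE x in lborel. x \<in> {1/2 <..< 3/4} \<longrightarrow> gg x = 0" using quarter_AE[of 2] by simp
  have q3: "AE x in lborel. x \<in> {3/4 <..< 1} \<longrightarrow> gg x = 0" using quarter_AE[of 3] by simp
  have s: "AE x in lborel. x \<noteq> 0 \<and> x \<noteq> 1/4 \<and> x \<noteq> 1/2 \<and> x \<noteq> 3/4 \<and> x \<noteq> (1::real)"
    using AE_lborel_singleton[of "0::real"] AE_lborel_singleton[of "1/4::real"] AE_lborel_singleton[of "1/2::real"]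
      AE_lborel_singleton[of "3/4::real"] AE_lborel_singleton[of "1::real"]
    by eventually_elim auto
  from q0 q1 q2 q3 s show ?thesis
  proof eventually_elim
    case (elim x)
    show ?case
    proof
      assume "x \<in> {0..1}"
      then consider "x \<in> {0 <..< 1/4}" | "x \<in> {1/4 <..< 1/2}" | "x \<in> {1/2 <..< 3/4}" | "x \<in> {3/4 <..< 1}"
        using elim(5) by fastforce
      then show "gg x = 0" using elim by cases auto
    qed
  qed
qed


lemma ACz: "AC_zero gam f"
  using gg_zero unfolding AC_zero_def gg_def .

end

lemma HUP_gam: "HUP gam (line 0 \<union> line (pi/2))"
  unfolding HUP_def using ACz by blast


theorem proposition4p8:
  shows "\<exists>(\<gamma> :: real \<Rightarrow> real \<times> real) \<theta>1 \<theta>2.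
    smooth_closed_curve \<gamma>
    \<and> \<theta>1 \<in> {0..<pi} \<and> \<theta>2 \<in> {0..<pi} \<and> \<theta>1 \<noteq> \<theta>2
    \<and> Phi_well_defined \<gamma> \<theta>1 \<and> Phi_well_defined \<gamma> \<theta>2
    \<and> orientation_preserving_circle_homeo (Phi \<gamma> \<theta>2 \<circ> Phi \<gamma> \<theta>1)
    \<and> rho \<gamma> \<theta>1 \<theta>2 \<in> \<rat>
    \<and> HUP \<gamma> (line \<theta>1 \<union> line \<theta>2)"
proof -
  have a: "(0::real) \<in> {0..<pi}" "pi/2 \<in> {0..<pi}" "(0::real) \<noteq> pi/2" by simp_all
  show ?thesis
    using gam_closed a wd1 wd2 ophomeo rho_rat HUP_gam by blast
qed

end
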